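(* Let $E_3=(S^*,V_1^*,I_1^*,I_2^* )$ be an endemic equilibrium of the model with all components positive. Define the Jacobian entries (all partial derivatives of $F_1$ at $(S^*,I_1^* )$ and of $F_2$ at $(S^*,I_2^* )$): - $C_{11}=-\frac{\partial F_1}{\partial S}-\frac{\partial F_2}{\partial S}-\lambda$; - $C_{13}=-\frac{\partial F_1}{\partial I_1}$ and $C_{14}=-\frac{\partial F_2}{\partial I_2}$; - $C_{22}=-\mu-kI_2^*$ and $C_{24}=-kV_1^*$; - $C_{31}=\frac{\partial F_1}{\partial S}$ and $C_{33}=\frac{\partial F_1}{\partial I_1}-\alpha_1$; - $C_{41}=\frac{\partial F_2}{\partial S}$, $C_{42}=kI_2^*$ and $C_{44}=\frac{\partial F_2}{\partial I_2}+kV_1^*-\alpha_2$. Let - $c_1=-C_{44}-C_{33}-C_{22}-C_{11}$; - $c_2=-C_{41}C_{14}-C_{42}C_{24}+C_{44}C_{33}+C_{44}C_{22}+C_{44}C_{11}-C_{31}C_{13}+C_{33}C_{22}+C_{33}C_{11}+C_{22}C_{11}$; - $c_3=-rC_{42}C_{14}+C_{41}C_{14}C_{33}+C_{41}C_{14}C_{22}+C_{42}C_{24}C_{33}+C_{42}C_{24}C_{11}+C_{44}C_{31}C_{13}-C_{44}C_{33}C_{22}-C_{44}C_{33}C_{11}-C_{44}C_{22}C_{11}+C_{31}C_{13}C_{22}-C_{33}C_{22}C_{11}$; - $c_4=rC_{42}C_{14}C_{33}-C_{41}C_{14}C_{33}C_{22}+C_{42}C_{24}C_{31}C_{13}-C_{42}C_{24}C_{33}C_{11}-C_{44}C_{31}C_{13}C_{22}+C_{44}C_{33}C_{22}C_{11}$.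 If $c_1c_2-c_3>0$ and $c_1c_2c_3-c_3^2-c_1^2c_4>0$, then $E_3$ is locally asymptotically stable.
   Context: The model is $\dot S=\Lambda-F_1(S,I_1)-F_2(S,I_2)-\lambda S$, $\dot V_1=rS-(\mu+kI_2)V_1$, $\dot I_1=F_1(S,I_1)-\alpha_1I_1$, $\dot I_2=F_2(S,I_2)+kI_2V_1-\alpha_2I_2$ on $\mathbb{R}^4_+$. The constants $\Lambda,\mu,r,k,\gamma_1,\gamma_2>0$ and $v_1,v_2\ge0$; $\lambda=r+\mu$ and $\alpha_i=\gamma_i+v_i+\mu$. For $i=1,2$ the incidence functions satisfy: - (H1) $F_i(S,I_i)=I_if_i(S,I_i)$ with $F_i,f_i\in C^2(\mathbb{R}^2_+,\mathbb{R}_+)$ and $F_i(0,I_i)=F_i(S,0)=0$; - (H2) $\partial f_i/\partial S>0$ and $\partial f_i/\partial I_i\le0$; - (H3) $\lim_{I_i\to0^+}F_i(S,I_i)/I_i$ exists and is positive for $S>0$. *)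

theory Defs
  imports "HOL-Analysis.Analysis"
begin

definition Rplus2 :: "(real \<times> real) set" where
  "Rplus2 = {(s, i). 0 \<le> s \<and> 0 \<le> i}"

definition Rplus4 :: "(real \<times> real \<times> real \<times> real) set" where
  "Rplus4 = {(s, v, i1, i2). 0 \<le> s \<and> 0 \<le> v \<and> 0 \<le> i1 \<and> 0 \<le> i2}"

definition C2_on :: "('a::real_normed_vector) set \<Rightarrow> ('a \<Rightarrow> real) \<Rightarrow> bool" where
  "C2_on S g \<longleftrightarrow> (\<exists>Dg :: 'a \<Rightarrow> ('a \<Rightarrow>\<^sub>L real). \<exists>D2g :: 'a \<Rightarrow> ('a \<Rightarrow>\<^sub>L ('a \<Rightarrow>\<^sub>L real)).
      (\<forall>x\<in>S. (g has_derivative blinfun_apply (Dg x)) (at x within S)) \<and>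
      (\<forall>x\<in>S. (Dg has_derivative blinfun_apply (D2g x)) (at x within S)) \<and>
      continuous_on S D2g)"

definition pd1 :: "(real \<Rightarrow> real \<Rightarrow> real) \<Rightarrow> real \<Rightarrow> real \<Rightarrow> real" where
  "pd1 G s i = deriv (\<lambda>x. G x i) s"

definition pd2 :: "(real \<Rightarrow> real \<Rightarrow> real) \<Rightarrow> real \<Rightarrow> real \<Rightarrow> real" where
  "pd2 G s i = deriv (\<lambda>y. G s y) i"

definition incidence_ok :: "(real \<Rightarrow> real \<Rightarrow> real) \<Rightarrow> (real \<Rightarrow> real \<Rightarrow> real) \<Rightarrow> bool" where
  "incidence_ok F f \<longleftrightarrow>
     \<comment> \<open>(H1)\<close>
     (\<forall>s i. 0 \<le> s \<longrightarrow> 0 \<le> i \<longrightarrow> F s i = i * f s i) \<and>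
     C2_on Rplus2 (\<lambda>(s, i). F s i) \<and> C2_on Rplus2 (\<lambda>(s, i). f s i) \<and>
     (\<forall>s i. 0 \<le> s \<longrightarrow> 0 \<le> i \<longrightarrow> 0 \<le> F s i \<and> 0 \<le> f s i) \<and>
     (\<forall>i. 0 \<le> i \<longrightarrow> F 0 i = 0) \<and> (\<forall>s. 0 \<le> s \<longrightarrow> F s 0 = 0) \<and>
     \<comment> \<open>(H2)\<close>
     (\<forall>s i. 0 \<le> s \<longrightarrow> 0 \<le> i \<longrightarrow>
        (\<exists>d>0. ((\<lambda>x. f x i) has_real_derivative d) (at s within {0..})) \<and>
        (\<exists>d\<le>0. ((\<lambda>y. f s y) has_real_derivative d) (at i within {0..}))) \<and>
     \<comment> \<open>(H3)\<close>
     (\<forall>s>0. \<exists>L>0. ((\<lambda>y. F s y / y) \<longlongrightarrow> L) (at_right 0))"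

text \<open>Right-hand side of the model, with lambda = r + mu and alpha_i = gamma_i + v_i + mu.\<close>
definition model_rhs ::
  "real \<Rightarrow> real \<Rightarrow> real \<Rightarrow> real \<Rightarrow> real \<Rightarrow> real \<Rightarrow> real \<Rightarrow> real \<Rightarrow>
   (real \<Rightarrow> real \<Rightarrow> real) \<Rightarrow> (real \<Rightarrow> real \<Rightarrow> real) \<Rightarrow>
   real \<times> real \<times> real \<times> real \<Rightarrow> real \<times> real \<times> real \<times> real" where
  "model_rhs Lam mu r k gamma1 gamma2 v1 v2 F1 F2 =
     (\<lambda>(s, v, i1, i2).
       (Lam - F1 s i1 - F2 s i2 - (r + mu) * s,
        r * s - (mu + k * i2) * v,
        F1 s i1 - (gamma1 + v1 + mu) * i1,
        F2 s i2 + k * i2 * v - (gamma2 + v2 + mu) * i2))"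

definition ode_sol :: "('a::real_normed_vector \<Rightarrow> 'a) \<Rightarrow> 'a set \<Rightarrow> real set \<Rightarrow> (real \<Rightarrow> 'a) \<Rightarrow> bool" where
  "ode_sol g X J x \<longleftrightarrow>
     (\<forall>t\<in>J. (x has_vector_derivative g (x t)) (at t within J) \<and> x t \<in> X)"

definition loc_asym_stable :: "('a::real_normed_vector \<Rightarrow> 'a) \<Rightarrow> 'a set \<Rightarrow> 'a \<Rightarrow> bool" where
  "loc_asym_stable g X e \<longleftrightarrow>
     e \<in> X \<and> g e = 0 \<and>
     (\<forall>\<epsilon>>0. \<exists>\<delta>>0. \<forall>x T. ode_sol g X {0..<T} x \<and> dist (x 0) e < \<delta> \<longrightarrow>
          (\<forall>t\<in>{0..<T}. dist (x t) e < \<epsilon>)) \<and>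
     (\<exists>\<eta>>0.
        (\<forall>x0\<in>X. dist x0 e < \<eta> \<longrightarrow> (\<exists>x. ode_sol g X {0..} x \<and> x 0 = x0)) \<and>
        (\<forall>x. ode_sol g X {0..} x \<and> dist (x 0) e < \<eta> \<longrightarrow> (x \<longlongrightarrow> e) at_top))"

end

theory Submission
  imports Defs "HOL-Analysis.Analysis"
begin

type_synonym R4 = "real \<times> real \<times> real \<times> real"

definition q1 :: "R4 \<Rightarrow> real" where "q1 z = fst z"
definition q2 :: "R4 \<Rightarrow> real" where "q2 z = fst (snd z)"
definition q3 :: "R4 \<Rightarrow> real" where "q3 z = fst (snd (snd z))"
definition q4 :: "R4 \<Rightarrow> real" where "q4 z = snd (snd (snd z))"

lemma norm4: "(norm z)\<^sup>2 = (q1 z)\<^sup>2 + (q2 z)\<^sup>2 + (q3 z)\<^sup>2 + (q4 z)\<^sup>2"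
  by (cases z) (simp add: norm_Pair q1_def q2_def q3_def q4_def)

locale lin4 = fixes C11 C13 C14 C22 C24 C31 C33 C41 C42 C44 r :: real
begin

definition "c1 = - C44 - C33 - C22 - C11"
definition "c2 = - C41 * C14 - C42 * C24 + C44 * C33 + C44 * C22 + C44 * C11
              - C31 * C13 + C33 * C22 + C33 * C11 + C22 * C11"
definition "c3 = - r * C42 * C14 + C41 * C14 * C33 + C41 * C14 * C22 + C42 * C24 * C33
              + C42 * C24 * C11 + C44 * C31 * C13 - C44 * C33 * C22 - C44 * C33 * C11
              - C44 * C22 * C11 + C31 * C13 * C22 - C33 * C22 * C11"
definition "c4 = r * C42 * C14 * C33 - C41 * C14 * C33 * C22 + C42 * C24 * C31 * C13
              - C42 * C24 * C33 * C11 - C44 * C31 * C13 * C22 + C44 * C33 * C22 * C11"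

definition Jm :: "R4 \<Rightarrow> R4" where
 "Jm z = (C11 * q1 z + C13 * q3 z + C14 * q4 z, r * q1 z + C22 * q2 z + C24 * q4 z,
          C31 * q1 z + C33 * q3 z, C41 * q1 z + C42 * q2 z + C44 * q4 z)"

lemma Jm_q: "q1 (Jm z) = C11 * q1 z + C13 * q3 z + C14 * q4 z"
  "q2 (Jm z) = r * q1 z + C22 * q2 z + C24 * q4 z"
  "q3 (Jm z) = C31 * q1 z + C33 * q3 z"
  "q4 (Jm z) = C41 * q1 z + C42 * q2 z + C44 * q4 z"
  by (simp_all add: Jm_def q1_def q2_def q3_def q4_def)

lemma CH:
  "q1 (Jm (Jm (Jm (Jm z)))) = - c1 * q1 (Jm (Jm (Jm z))) - c2 * q1 (Jm (Jm z)) - c3 * q1 (Jm z) - c4 * q1 z"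
  "q2 (Jm (Jm (Jm (Jm z)))) = - c1 * q2 (Jm (Jm (Jm z))) - c2 * q2 (Jm (Jm z)) - c3 * q2 (Jm z) - c4 * q2 z"
  "q3 (Jm (Jm (Jm (Jm z)))) = - c1 * q3 (Jm (Jm (Jm z))) - c2 * q3 (Jm (Jm z)) - c3 * q3 (Jm z) - c4 * q3 z"
  "q4 (Jm (Jm (Jm (Jm z)))) = - c1 * q4 (Jm (Jm (Jm z))) - c2 * q4 (Jm (Jm z)) - c3 * q4 (Jm z) - c4 * q4 z"
  by (simp_all add: Jm_q c1_def c2_def c3_def c4_def algebra_simps)

definition "D2 = c1 * c2 - c3"
definition "D3 = c1 * c2 * c3 - c3^2 - c1^2 * c4"

definition Wb :: "real \<Rightarrow> real \<Rightarrow> real \<Rightarrow> real \<Rightarrow> real \<Rightarrow> real \<Rightarrow> real \<Rightarrow> real \<Rightarrow> real" where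
 "Wb a1 a2 a3 a4 b1 b2 b3 b4 = c4 * D2 * a1 * b1 + c4 * c1^2 * (a1 * b2 + a2 * b1)
   + c4 * c1 * (a1 * b3 + a3 * b1) + (c1^2 * c3 + c2 * D2 - c1 * c4) * a2 * b2
   + c1^2 * c2 * (a2 * b3 + a3 * b2) + D2 * (a2 * b4 + a4 * b2) + (c1^3 + c3) * a3 * b3
   + c1^2 * (a3 * b4 + a4 * b3) + c1 * a4 * b4"

lemma Wb_Ac: "Wb a b c d b c d (- c1 * d - c2 * c - c3 * b - c4 * a) = - D3 * b^2"
  by (simp add: Wb_def D2_def D3_def algebra_simps power2_eq_square power3_eq_cube)

lemma Wb_pos: assumes "c1 > 0" "c3 > 0" "c4 > 0" "D3 > 0"
  shows "Wb a b c d a b c d \<ge> c4 * D3 / c3 * a^2"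
proof -
  have "Wb a b c d a b c d = c1 * (d + c1 * c + D2 / c1 * b)^2 + c3 * (c + c1 * b + c1 * c4 / c3 * a)^2
     + D3 / c1 * b^2 + c4 * D3 / c3 * a^2"
    using assms by (simp add: Wb_def D2_def D3_def field_simps power2_eq_square power3_eq_cube)
  moreover have "c1 * (d + c1 * c + D2 / c1 * b)^2 + c3 * (c + c1 * b + c1 * c4 / c3 * a)^2 + D3 / c1 * b^2 \<ge> 0"
    using assms by (intro add_nonneg_nonneg mult_nonneg_nonneg) auto
  ultimately show ?thesis by linarith
qed


definition Bq :: "(R4 \<Rightarrow> real) \<Rightarrow> R4 \<Rightarrow> R4 \<Rightarrow> real" where
 "Bq q z h = Wb (q z) (q (Jm z)) (q (Jm (Jm z))) (q (Jm (Jm (Jm z))))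
                (q h) (q (Jm h)) (q (Jm (Jm h))) (q (Jm (Jm (Jm h))))"

definition Bf :: "R4 \<Rightarrow> R4 \<Rightarrow> real" where
 "Bf z h = Bq q1 z h + Bq q2 z h + Bq q3 z h + Bq q4 z h"

lemma Bf_J: "Bf z (Jm z) = - D3 * (norm (Jm z))^2"
  unfolding Bf_def Bq_def norm4 CH Wb_Ac by (simp add: algebra_simps)

lemma Bq_pos: assumes "c1 > 0" "c3 > 0" "c4 > 0" "D3 > 0"
  shows "c4 * D3 / c3 * (q z)^2 \<le> Bq q z z"
  unfolding Bq_def by (rule Wb_pos[OF assms])

lemma Bf_pos: assumes "c1 > 0" "c3 > 0" "c4 > 0" "D3 > 0"
  shows "Bf z z \<ge> c4 * D3 / c3 * (norm z)^2"
proof -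
  have e: "c4 * D3 / c3 * (norm z)^2 = c4 * D3 / c3 * (q1 z)^2 + c4 * D3 / c3 * (q2 z)^2
     + c4 * D3 / c3 * (q3 z)^2 + c4 * D3 / c3 * (q4 z)^2"
    unfolding norm4 by (simp add: distrib_left)
  have "c4 * D3 / c3 * (q1 z)^2 + c4 * D3 / c3 * (q2 z)^2
     + c4 * D3 / c3 * (q3 z)^2 + c4 * D3 / c3 * (q4 z)^2 \<le> Bq q1 z z + Bq q2 z z + Bq q3 z z + Bq q4 z z"
    by (intro add_mono Bq_pos[OF assms])
  then show ?thesis unfolding e Bf_def .
qed

lemma Bf_sym: "Bf z h = Bf h z"
  by (simp add: Bf_def Bq_def Wb_def algebra_simps)

lemma q_add: "q1 (x + y) = q1 x + q1 y" "q2 (x + y) = q2 x + q2 y"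
  "q3 (x + y) = q3 x + q3 y" "q4 (x + y) = q4 x + q4 y"
  by (simp_all add: q1_def q2_def q3_def q4_def)
lemma q_scale: "q1 (a *\<^sub>R x) = a * q1 x" "q2 (a *\<^sub>R x) = a * q2 x"
  "q3 (a *\<^sub>R x) = a * q3 x" "q4 (a *\<^sub>R x) = a * q4 x"
  by (simp_all add: q1_def q2_def q3_def q4_def)

lemma Jm_add: "Jm (x + y) = Jm x + Jm y"
  by (simp add: Jm_def q_add algebra_simps)
lemma Jm_scale: "Jm (a *\<^sub>R x) = a *\<^sub>R Jm x"
  by (simp add: Jm_def q_scale algebra_simps)
lemma linear_Jm: "linear Jm"
  by (rule linearI) (simp_all add: Jm_add Jm_scale)

lemma Wb_lin: "Wb a1 a2 a3 a4 (b1 + d1) (b2 + d2) (b3 + d3) (b4 + d4) =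
   Wb a1 a2 a3 a4 b1 b2 b3 b4 + Wb a1 a2 a3 a4 d1 d2 d3 d4"
  "Wb a1 a2 a3 a4 (s * b1) (s * b2) (s * b3) (s * b4) = s * Wb a1 a2 a3 a4 b1 b2 b3 b4"
  by (simp_all add: Wb_def algebra_simps)

lemma lin_q: "linear q1" "linear q2" "linear q3" "linear q4"
  by (intro linearI; simp add: q_add q_scale)+

lemma lin_qJ: assumes "linear q" shows "linear (\<lambda>h. q (Jm h))"
  using linear_compose[OF linear_Jm assms] by (simp add: o_def)

lemma Wb_linear:
  fixes l1 l2 l3 l4 :: "'a::real_vector \<Rightarrow> real"
  assumes l: "linear l1" "linear l2" "linear l3" "linear l4"
  shows "linear (\<lambda>h. Wb a1 a2 a3 a4 (l1 h) (l2 h) (l3 h) (l4 h))"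
proof (rule linearI)
  fix x y :: 'a
  show "Wb a1 a2 a3 a4 (l1 (x + y)) (l2 (x + y)) (l3 (x + y)) (l4 (x + y)) =
        Wb a1 a2 a3 a4 (l1 x) (l2 x) (l3 x) (l4 x) + Wb a1 a2 a3 a4 (l1 y) (l2 y) (l3 y) (l4 y)"
    by (simp only: linear_add[OF l(1)] linear_add[OF l(2)] linear_add[OF l(3)] linear_add[OF l(4)] Wb_lin(1))
next
  fix c :: real and x :: 'a
  show "Wb a1 a2 a3 a4 (l1 (c *\<^sub>R x)) (l2 (c *\<^sub>R x)) (l3 (c *\<^sub>R x)) (l4 (c *\<^sub>R x)) =
        c *\<^sub>R Wb a1 a2 a3 a4 (l1 x) (l2 x) (l3 x) (l4 x)"
    by (simp only: linear_scale[OF l(1)] linear_scale[OF l(2)] linear_scale[OF l(3)] linear_scale[OF l(4)]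
        real_scaleR_def Wb_lin(2))
qed

lemma linear_Bq: assumes "linear q" shows "linear (Bq q z)"
  unfolding Bq_def
  by (intro Wb_linear assms lin_qJ)

lemma linear_Bf: "linear (Bf z)"
  unfolding Bf_def by (intro linear_compose_add linear_Bq lin_q)

lemma bilinear_Bf: "bilinear Bf"
proof -
  have "(\<lambda>x. Bf x y) = Bf y" for y by (simp add: fun_eq_iff Bf_sym)
  then show ?thesis unfolding bilinear_def by (simp add: linear_Bf)
qed

lemma bbl_Bf: "bounded_bilinear Bf"
  using bilinear_Bf by (simp add: bilinear_conv_bounded_bilinear)

end

lemma picard_global:
  fixes G :: "'a::banach \<Rightarrow> 'a"
  assumes L: "L > 0" and lip: "\<And>y y'. norm (G y - G y') \<le> L * norm (y - y')"
    and bnd: "\<And>y. norm (G y) \<le> Mb"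
  shows "\<exists>x. x 0 = x0 \<and> (\<forall>t\<ge>0. (x has_vector_derivative G (x t)) (at t within {0..}))"
proof -
  define c where "c = 2 * L"
  have c: "c > 0" using L by (simp add: c_def)
  have Mb: "Mb \<ge> 0" using bnd[of x0] norm_ge_zero[of "G x0"] by linarith
  have contG: "continuous_on UNIV G"
    by (rule lipschitz_on_continuous_on[of L]) (rule lipschitz_onI, use lip L in \<open>auto simp: dist_norm\<close>)
  define H where "H y s = G (exp (c * s) *\<^sub>R apply_bcontfun y s)" for y :: "real \<Rightarrow>\<^sub>C 'a" and s
  have contH: "continuous_on S (H y)" for y S
    unfolding H_def
    by (rule continuous_on_compose2[OF contG]) (auto intro!: continuous_intros)
  have intH: "H y integrable_on {a..b}" for y a b
    by (rule integrable_continuous_interval[OF contH])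
  define P where "P y t = exp (- c * max t 0) *\<^sub>R (x0 + integral {0..max t 0} (H y))" for y t
  have contI: "continuous_on UNIV (\<lambda>t. integral {0..max t 0} (H y))" for y
  proof (rule continuous_at_imp_continuous_on, intro ballI)
    fix t :: real
    have "continuous_on {..max t 0 + 1} (\<lambda>t. integral {0..max t 0} (H y))"
      by (rule continuous_on_compose2[OF indefinite_integral_continuous_1[OF intH[of y 0 "max t 0 + 1"]]])
         (auto intro!: continuous_intros)
    then have "continuous_on {..<max t 0 + 1} (\<lambda>t. integral {0..max t 0} (H y))"
      by (rule continuous_on_subset) auto
    then have "\<forall>x\<in>{..<max t 0 + 1}. isCont (\<lambda>t. integral {0..max t 0} (H y)) x"
      by (simp add: continuous_on_eq_continuous_at)
    moreover have "t \<in> {..<max t 0 + 1}" by simp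
    ultimately show "isCont (\<lambda>t. integral {0..max t 0} (H y)) t" by blast
  qed
  have normI: "norm (integral {0..u} (H y)) \<le> Mb * u" if "u \<ge> 0" for y u
  proof -
    have "norm (integral {0..u} (H y)) \<le> integral {0..u} (\<lambda>_. Mb)"
      by (rule integral_norm_bound_integral[OF intH]) (auto simp: H_def bnd)
    then show ?thesis using that by (simp add: mult.commute)
  qed
  have ueu: "u * exp (- c * u) \<le> 1 / c" if "u \<ge> 0" for u
  proof -
    have "c * u \<le> exp (c * u)" using exp_ge_add_one_self[of "c*u"] by linarith
    then have "u \<le> exp (c * u) / c" using c by (simp add: field_simps)
    then have "u * exp (- c * u) \<le> exp (c * u) / c * exp (- c * u)"
      by (rule mult_right_mono) simp
    also have "\<dots> = 1 / c" by (simp add: exp_minus field_simps)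
    finally show ?thesis .
  qed
  have Pb: "norm (P y t) \<le> norm x0 + Mb / c" for y t
  proof -
    define u where "u = max t 0"
    have u: "u \<ge> 0" by (simp add: u_def)
    have e1: "exp (- c * u) \<le> 1" using c u by simp
    have "norm (P y t) = exp (- c * u) * norm (x0 + integral {0..u} (H y))"
      by (simp add: P_def u_def)
    also have "\<dots> \<le> exp (- c * u) * (norm x0 + Mb * u)"
      by (intro mult_left_mono order.trans[OF norm_triangle_ineq]) (auto simp: normI u)
    also have "\<dots> = exp (- c * u) * norm x0 + Mb * (u * exp (- c * u))" by (simp add: algebra_simps)
    also have "\<dots> \<le> norm x0 + Mb * (1 / c)"
      by (intro add_mono mult_left_mono ueu u Mb) (use e1 in \<open>auto intro: mult_left_le_one_le\<close>)
    finally show ?thesis by simp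
  qed
  have Pin: "P y \<in> bcontfun" for y
    unfolding bcontfun_def
  proof safe
    show "continuous_on UNIV (P y)" unfolding P_def
      by (intro continuous_intros contI)
    show "bounded (range (P y))"
      unfolding bounded_iff using Pb by blast
  qed
  define Phi where "Phi y = Bcontfun (P y)" for y
  have Phi_apply: "apply_bcontfun (Phi y) = P y" for y
    unfolding Phi_def using Pin by (simp add: Bcontfun_inverse)
  have contr: "dist (Phi y1) (Phi y2) \<le> 1/2 * dist y1 y2" for y1 y2
  proof (rule dist_bound)
    fix t :: real
    define u where "u = max t 0"
    have u: "u \<ge> 0" by (simp add: u_def)
    define D where "D = dist y1 y2"
    have hd: "norm (H y1 s - H y2 s) \<le> L * D * exp (c * s)" for s
    proof -
      have "norm (H y1 s - H y2 s) \<le> L * norm (exp (c * s) *\<^sub>R (apply_bcontfun y1 s - apply_bcontfun y2 s))"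
        unfolding H_def using lip by (simp add: scaleR_diff_right)
      also have "\<dots> = L * exp (c * s) * dist (apply_bcontfun y1 s) (apply_bcontfun y2 s)"
        by (simp add: dist_norm)
      also have "\<dots> \<le> L * exp (c * s) * D"
        unfolding D_def using L by (intro mult_left_mono dist_bounded) auto
      finally show ?thesis by (simp add: algebra_simps)
    qed
    have fi: "((\<lambda>s. L * D * exp (c * s)) has_integral (L * D * exp (c * u) / c - L * D * exp (c * 0) / c)) {0..u}"
      apply (rule fundamental_theorem_of_calculus[OF u])
      apply (rule has_vector_derivative_at_within)
      using c by (auto intro!: derivative_eq_intros simp: has_real_derivative_iff_has_vector_derivative[symmetric])
    have "norm (integral {0..u} (\<lambda>s. H y1 s - H y2 s)) \<le> integral {0..u} (\<lambda>s. L * D * exp (c * s))"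
      by (rule integral_norm_bound_integral)
         (auto intro!: integrable_diff intH hd intro: has_integral_integrable[OF fi])
    also have "\<dots> = L * D * (exp (c * u) - 1) / c"
      using integral_unique[OF fi] by (simp add: algebra_simps diff_divide_distrib)
    finally have n1: "norm (integral {0..u} (\<lambda>s. H y1 s - H y2 s)) \<le> L * D * (exp (c * u) - 1) / c" .
    have "dist (apply_bcontfun (Phi y1) t) (apply_bcontfun (Phi y2) t)
        = exp (- c * u) * norm (integral {0..u} (\<lambda>s. H y1 s - H y2 s))"
      unfolding Phi_apply P_def u_def[symmetric] dist_norm
      by (simp add: integral_diff intH scaleR_diff_right[symmetric])
    also have "\<dots> \<le> exp (- c * u) * (L * D * (exp (c * u) - 1) / c)"
      by (intro mult_left_mono n1) simp
    also have "\<dots> = D / 2 * (1 - exp (- c * u))"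
      using c L unfolding c_def by (simp add: field_simps exp_minus)
    also have "\<dots> \<le> D / 2"
      using c u unfolding D_def by (intro mult_left_le) (auto simp: D_def)
    finally show "dist (apply_bcontfun (Phi y1) t) (apply_bcontfun (Phi y2) t) \<le> 1/2 * dist y1 y2"
      by (simp add: D_def)
  qed
  obtain yf where yf: "Phi yf = yf"
    using banach_fix_type[of "1/2" Phi] contr by auto
  define x where "x t = exp (c * t) *\<^sub>R apply_bcontfun yf t" for t
  have Hx: "H yf = (\<lambda>s. G (x s))" by (simp add: H_def x_def fun_eq_iff)
  have xeq: "x t = x0 + integral {0..t} (\<lambda>s. G (x s))" if "t \<ge> 0" for t
  proof -
    have "apply_bcontfun yf t = P yf t" using yf Phi_apply by metis
    then show ?thesis using that by (simp add: x_def P_def Hx exp_minus field_simps)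
  qed
  have contGx: "continuous_on S (\<lambda>s. G (x s))" for S
    using contH[where y=yf and S=S] by (simp add: Hx)
  show ?thesis
  proof (intro exI conjI allI impI)
    show "x 0 = x0" using xeq[of 0] by simp
    fix t :: real assume t: "t \<ge> 0"
    have d1: "((\<lambda>u. integral {0..u} (\<lambda>s. G (x s))) has_vector_derivative G (x t)) (at t within {0..t+1})"
      by (rule integral_has_vector_derivative[OF contGx]) (use t in auto)
    have d2: "((\<lambda>u. x0 + integral {0..u} (\<lambda>s. G (x s))) has_vector_derivative G (x t)) (at t within {0..t+1})"
      using has_vector_derivative_add[OF has_vector_derivative_const d1] by simp
    have d3: "(x has_vector_derivative G (x t)) (at t within {0..t+1})"
      by (rule has_vector_derivative_transform_within[OF d2, of 1]) (use t xeq in auto)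
    have "at t within {0..t+1} = at t within {0..}"
      by (rule at_within_nhd[where S="{..<t+1}"]) auto
    then show "(x has_vector_derivative G (x t)) (at t within {0..})" using d3 by simp
  qed
qed

lemma bb_deriv:
  fixes x :: "real \<Rightarrow> 'a::real_normed_vector"
  assumes bb: "bounded_bilinear B" and sym: "\<And>z h. B z h = B h z"
    and d: "(x has_vector_derivative v) (at t within S)"
  shows "((\<lambda>t. B (x t - e) (x t - e)) has_real_derivative 2 * B (x t - e) v) (at t within S)"
proof -
  have d': "((\<lambda>t. x t - e) has_vector_derivative v) (at t within S)"
    using has_vector_derivative_diff[OF d has_vector_derivative_const[of e]] by simp
  have "((\<lambda>t. B (x t - e) (x t - e)) has_vector_derivative (B (x t - e) v + B v (x t - e))) (at t within S)"
    by (rule bounded_bilinear.has_vector_derivative[OF bb d' d'])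
  then show ?thesis using sym[of v "x t - e"]
    by (simp add: has_real_derivative_iff_has_vector_derivative)
qed

lemma lyap_stay:
  fixes x :: "real \<Rightarrow> 'a::real_normed_vector" and B :: "'a \<Rightarrow> 'a \<Rightarrow> real"
  assumes bb: "bounded_bilinear B" and sym: "\<And>z h. B z h = B h z"
    and pos: "\<And>z. B z z \<ge> mm * (norm z)^2" and mm: "mm > 0"
    and up: "\<And>z. B z z \<le> KB * (norm z)^2"
    and dec: "\<And>y. norm (y - e) < \<rho> \<Longrightarrow> B (y - e) (g y) \<le> 0"
    and cont: "continuous_on {0..<T} x"
    and der: "\<And>t. t \<in> {0..<T} \<Longrightarrow> norm (x t - e) < \<rho> \<Longrightarrow> (x has_vector_derivative g (x t)) (at t within {0..<T})"
    and eps: "0 < \<epsilon>" "\<epsilon> \<le> \<rho>" and init: "KB * (norm (x 0 - e))^2 < mm * \<epsilon>^2"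
  shows "\<forall>t\<in>{0..<T}. norm (x t - e) < \<epsilon>"
proof (rule ccontr)
  assume neg: "\<not> ?thesis"
  define S where "S = {t\<in>{0..<T}. \<epsilon> \<le> norm (x t - e)}"
  have Sne: "S \<noteq> {}" using neg by (auto simp: S_def not_less)
  have bdd: "bdd_below S" by (auto simp: S_def bdd_below_def)
  define t0 where "t0 = Inf S"
  have low: "t0 \<le> s" if "s \<in> S" for s unfolding t0_def using that bdd by (rule cInf_lower)
  have t0ge: "t0 \<ge> 0" unfolding t0_def using Sne by (rule cInf_greatest) (auto simp: S_def)
  obtain s1 where s1: "s1 \<in> S" using Sne by blast
  have t0T: "t0 < T" using low[OF s1] s1 by (auto simp: S_def)
  have h0: "norm (x 0 - e) < \<epsilon>"
  proof -
    have "mm * (norm (x 0 - e))^2 < mm * \<epsilon>^2"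
      using pos[of "x 0 - e"] up[of "x 0 - e"] init by linarith
    then have "(norm (x 0 - e))^2 < \<epsilon>^2" using mm by simp
    then show ?thesis using eps by (smt (verit) norm_ge_zero power_mono)
  qed
  have t0S: "\<epsilon> \<le> norm (x t0 - e)"
  proof (rule ccontr)
    assume "\<not> \<epsilon> \<le> norm (x t0 - e)"
    then have lt: "norm (x t0 - e) < \<epsilon>" by simp
    have "t0 \<in> {0..<T}" using t0ge t0T by simp
    then have "\<forall>ee>0. \<exists>d>0. \<forall>s\<in>{0..<T}. dist s t0 < d \<longrightarrow> dist (x s) (x t0) < ee"
      using cont unfolding continuous_on_iff by blast
    moreover have "\<epsilon> - norm (x t0 - e) > 0" using lt by simp
    ultimately obtain d where d: "d > 0" and dd: "\<And>s. s \<in> {0..<T} \<Longrightarrow> dist s t0 < d \<Longrightarrow> dist (x s) (x t0) < \<epsilon> - norm (x t0 - e)"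
      by blast
    have "Inf S < t0 + d" using d t0_def by simp
    then obtain s where s: "s \<in> S" "s < t0 + d" using cInf_less_iff[OF Sne bdd] by blast
    have "dist s t0 < d" using s low[OF s(1)] by (simp add: dist_real_def)
    then have "dist (x s) (x t0) < \<epsilon> - norm (x t0 - e)" using dd s by (auto simp: S_def)
    moreover have "norm (x s - e) \<le> dist (x s) (x t0) + norm (x t0 - e)"
      using norm_triangle_ineq[of "x s - x t0" "x t0 - e"] by (simp add: dist_norm)
    ultimately show False using s by (auto simp: S_def)
  qed
  have t0pos: "t0 > 0" using t0ge t0S h0 by (cases "t0 = 0") auto
  define phi where "phi t = B (x t - e) (x t - e)" for t
  have inside: "norm (x t - e) < \<epsilon>" if "0 \<le> t" "t < t0" for t
  proof (rule ccontr)
    assume "\<not> norm (x t - e) < \<epsilon>"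
    then have "t \<in> S" using that t0T by (auto simp: S_def)
    then show False using low[of t] that by simp
  qed
  have "phi t0 - phi 0 \<le> 0"
  proof -
    have c: "continuous_on {0..t0} phi" unfolding phi_def
      by (intro bounded_bilinear.continuous_on[OF bb] continuous_intros continuous_on_subset[OF cont]) (use t0T in auto)
    have dv: "(phi has_real_derivative 2 * B (x t - e) (g (x t))) (at t)" if "0 < t" "t < t0" for t
    proof -
      have "(x has_vector_derivative g (x t)) (at t within {0..<T})"
        using der[of t] inside[of t] that eps t0T by auto
      moreover have "at t within {0..<T} = at t within UNIV"
        by (rule at_within_nhd[where S="{0<..<T}"]) (use that t0T in auto)
      ultimately have "(x has_vector_derivative g (x t)) (at t)" by simp
      then show ?thesis unfolding phi_def by (rule bb_deriv[OF bb sym])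
    qed
    have "\<And>s. 0 < s \<Longrightarrow> s < t0 \<Longrightarrow> phi differentiable (at s)"
      using dv real_differentiable_def by blast
    from MVT[OF t0pos c this] obtain l z where z: "0 < z" "z < t0" "(phi has_real_derivative l) (at z)" "phi t0 - phi 0 = (t0 - 0) * l"
      by blast
    have "l = 2 * B (x z - e) (g (x z))" using DERIV_unique[OF z(3) dv[OF z(1,2)]] .
    also have "\<dots> \<le> 0" using dec[of "x z"] inside[of z] z eps by auto
    finally show ?thesis using z t0pos by (simp add: mult_nonneg_nonpos)
  qed
  moreover have "mm * \<epsilon>^2 \<le> phi t0"
  proof -
    have "\<epsilon>^2 \<le> (norm (x t0 - e))^2" using t0S eps by (simp add: power_mono)
    then have "mm * \<epsilon>^2 \<le> mm * (norm (x t0 - e))^2" using mm by simp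
    then show ?thesis using pos[of "x t0 - e"] unfolding phi_def by linarith
  qed
  moreover have "phi 0 \<le> KB * (norm (x 0 - e))^2" unfolding phi_def by (rule up)
  ultimately show False using init by linarith
qed

lemma lyap_decay:
  fixes x :: "real \<Rightarrow> 'a::real_normed_vector" and B :: "'a \<Rightarrow> 'a \<Rightarrow> real"
  assumes bb: "bounded_bilinear B" and sym: "\<And>z h. B z h = B h z"
    and pos: "\<And>z. B z z \<ge> mm * (norm z)^2" and mm: "mm > 0"
    and up: "\<And>z. B z z \<le> KB * (norm z)^2" and KB: "KB > 0"
    and strict: "\<And>y. norm (y - e) < \<rho> \<Longrightarrow> B (y - e) (g y) \<le> - \<gamma> * (norm (y - e))^2"
    and gam: "\<gamma> > 0"
    and cont: "continuous_on {0..} x"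
    and der: "\<And>t. t \<ge> 0 \<Longrightarrow> (x has_vector_derivative g (x t)) (at t within {0..})"
    and inb: "\<And>t. t \<ge> 0 \<Longrightarrow> norm (x t - e) < \<rho>"
  shows "(x \<longlongrightarrow> e) at_top"
proof -
  define phi where "phi t = B (x t - e) (x t - e)" for t
  define \<kappa> where "\<kappa> = 2 * \<gamma> / KB"
  have kap: "\<kappa> > 0" using gam KB by (simp add: \<kappa>_def)
  define psi where "psi t = phi t * exp (\<kappa> * t)" for t
  have bound: "phi t \<le> phi 0 * exp (- \<kappa> * t)" if t: "t > 0" for t
  proof -
    have c: "continuous_on {0..t} psi" unfolding psi_def phi_def
      by (intro bounded_bilinear.continuous_on[OF bb] continuous_intros continuous_on_subset[OF cont]) auto
    have dv: "(psi has_real_derivative (2 * B (x s - e) (g (x s)) * exp (\<kappa> * s) + phi s * (exp (\<kappa> * s) * \<kappa>))) (at s)"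
      if "0 < s" for s
    proof -
      have "(x has_vector_derivative g (x s)) (at s within {0..})" using der[of s] that by auto
      moreover have "at s within {0..} = at s within UNIV"
        by (rule at_within_nhd[where S="{0<..}"]) (use that in auto)
      ultimately have "(x has_vector_derivative g (x s)) (at s)" by simp
      then have "(phi has_real_derivative 2 * B (x s - e) (g (x s))) (at s)"
        unfolding phi_def by (rule bb_deriv[OF bb sym])
      then show ?thesis unfolding psi_def
        by (auto intro!: derivative_eq_intros)
    qed
    have "\<And>s. 0 < s \<Longrightarrow> s < t \<Longrightarrow> psi differentiable (at s)"
      using dv real_differentiable_def by blast
    from MVT[OF t c this] obtain l z where z: "0 < z" "z < t" "(psi has_real_derivative l) (at z)" "psi t - psi 0 = (t - 0) * l"
      by blast
    have "l = 2 * B (x z - e) (g (x z)) * exp (\<kappa> * z) + phi z * (exp (\<kappa> * z) * \<kappa>)"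
      using DERIV_unique[OF z(3) dv[OF z(1)]] .
    also have "\<dots> = (2 * B (x z - e) (g (x z)) + \<kappa> * phi z) * exp (\<kappa> * z)" by (simp add: algebra_simps)
    also have "\<dots> \<le> 0"
    proof -
      have "2 * B (x z - e) (g (x z)) \<le> - 2 * \<gamma> * (norm (x z - e))^2"
        using strict[OF inb[of z]] z by simp
      moreover have "\<kappa> * phi z \<le> \<kappa> * (KB * (norm (x z - e))^2)"
        using up[of "x z - e"] kap unfolding phi_def by (simp add: mult_left_mono)
      moreover have "\<kappa> * (KB * (norm (x z - e))^2) = 2 * \<gamma> * (norm (x z - e))^2"
        using KB by (simp add: \<kappa>_def)
      ultimately have "2 * B (x z - e) (g (x z)) + \<kappa> * phi z \<le> 0" by linarith
      then show ?thesis by (simp add: mult_nonpos_nonneg)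
    qed
    finally have "psi t \<le> psi 0" using z t by (smt (verit) mult_nonneg_nonpos)
    then have "phi t * exp (\<kappa> * t) \<le> phi 0" by (simp add: psi_def)
    then have "phi t * exp (\<kappa> * t) * exp (- \<kappa> * t) \<le> phi 0 * exp (- \<kappa> * t)"
      by (rule mult_right_mono) simp
    then show ?thesis by (simp add: mult.assoc exp_add[symmetric])
  qed
  have nb: "norm (x t - e) \<le> sqrt (phi 0 / mm * exp (- \<kappa> * t))" if "t > 0" for t
  proof -
    have "mm * (norm (x t - e))^2 \<le> phi 0 * exp (- \<kappa> * t)"
      using pos[of "x t - e"] bound[OF that] unfolding phi_def by linarith
    then have "(norm (x t - e))^2 \<le> phi 0 / mm * exp (- \<kappa> * t)"
      using mm by (simp add: field_simps)
    then show ?thesis by (metis norm_ge_zero real_sqrt_le_mono real_sqrt_abs abs_norm_cancel power2_abs)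
  qed
  have lim_exp: "((\<lambda>t. exp (- \<kappa> * t)) \<longlongrightarrow> 0) at_top"
  proof -
    have "filterlim (\<lambda>t. \<kappa> * t) at_top at_top"
      by (rule filterlim_tendsto_pos_mult_at_top[OF tendsto_const kap filterlim_ident])
    then have "filterlim (\<lambda>t. - (\<kappa> * t)) at_bot at_top"
      by (simp add: filterlim_uminus_at_bot)
    then show ?thesis using tendsto_compose_filtermap exp_at_bot
      by (simp add: filterlim_compose[OF exp_at_bot])
  qed
  have "((\<lambda>t. sqrt (phi 0 / mm * exp (- \<kappa> * t))) \<longlongrightarrow> sqrt (phi 0 / mm * 0)) at_top"
    by (intro tendsto_real_sqrt tendsto_mult tendsto_const lim_exp)
  then have l0: "((\<lambda>t. sqrt (phi 0 / mm * exp (- \<kappa> * t))) \<longlongrightarrow> 0) at_top" by simp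
  have "((\<lambda>t. x t - e) \<longlongrightarrow> 0) at_top"
    by (rule Lim_null_comparison[OF _ l0]) (use nb in \<open>auto simp: eventually_at_top_dense\<close>)
  then show ?thesis by (simp add: Lim_null[symmetric])
qed

lemma at_pos_real: "(t::real) > 0 \<Longrightarrow> at t within {0..} = at t"
  by (rule at_within_nhd[where S="{0<..}"]) auto

lemma Rplus2_at:
  assumes "S0 > 0" "I0 > 0"
  shows "at (S0, I0) within Rplus2 = at (S0, I0)"
proof (rule at_within_nhd[where S="ball (S0,I0) (min S0 I0)"])
  have "ball (S0,I0) (min S0 I0) \<subseteq> Rplus2"
  proof
    fix p assume p: "p \<in> ball (S0,I0) (min S0 I0)"
    obtain s i where pe: "p = (s, i)" by (cases p)
    have "dist S0 s \<le> dist (S0,I0) p" "dist I0 i \<le> dist (S0,I0) p"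
      using dist_fst_le[of "(S0,I0)" p] dist_snd_le[of "(S0,I0)" p] pe by auto
    moreover have "dist (S0,I0) p < min S0 I0" using p by simp
    ultimately have "\<bar>S0 - s\<bar> < S0" "\<bar>I0 - i\<bar> < I0" unfolding dist_real_def by linarith+
    then have "s \<ge> 0" "i \<ge> 0" by linarith+
    then show "p \<in> Rplus2" using pe by (simp add: Rplus2_def)
  qed
  then show "Rplus2 \<inter> ball (S0, I0) (min S0 I0) - {(S0, I0)} = UNIV \<inter> ball (S0, I0) (min S0 I0) - {(S0, I0)}"
    by auto
qed (use assms in auto)

lemma cball_Rplus2:
  assumes "0 < \<rho>" "\<rho> < min S0 I0"
  shows "cball (S0, I0) \<rho> \<subseteq> Rplus2"
proof
  fix p assume p: "p \<in> cball (S0,I0) \<rho>"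
  obtain s i where pe: "p = (s, i)" by (cases p)
  have "dist S0 s \<le> dist (S0,I0) p" "dist I0 i \<le> dist (S0,I0) p"
    using dist_fst_le[of "(S0,I0)" p] dist_snd_le[of "(S0,I0)" p] pe by auto
  moreover have "dist (S0,I0) p \<le> \<rho>" using p by simp
  ultimately have "\<bar>S0 - s\<bar> < S0" "\<bar>I0 - i\<bar> < I0" using assms unfolding dist_real_def by linarith+
  then have "s \<ge> 0" "i \<ge> 0" by linarith+
  then show "p \<in> Rplus2" using pe by (simp add: Rplus2_def)
qed

lemma F_facts:
  assumes H: "incidence_ok F f" and pos: "S0 > 0" "I0 > 0"
  shows "((\<lambda>p. F (fst p) (snd p)) has_derivative (\<lambda>h. fst h * pd1 F S0 I0 + snd h * pd2 F S0 I0)) (at (S0, I0))"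
    and "pd1 F S0 I0 > 0"
    and "pd2 F S0 I0 \<le> f S0 I0"
    and "\<And>\<rho>. 0 < \<rho> \<Longrightarrow> \<rho> < min S0 I0 \<Longrightarrow> \<exists>L. \<forall>p\<in>cball (S0,I0) \<rho>. \<forall>q\<in>cball (S0,I0) \<rho>.
           \<bar>F (fst p) (snd p) - F (fst q) (snd q)\<bar> \<le> L * norm (p - q)"
proof -
  note HH = H[unfolded incidence_ok_def]
  have Fi: "\<And>s i. 0 \<le> s \<Longrightarrow> 0 \<le> i \<Longrightarrow> F s i = i * f s i"
    using HH[THEN conjunct1] by blast
  have C2: "C2_on Rplus2 (\<lambda>(s, i). F s i)"
    using HH[THEN conjunct2, THEN conjunct1] .
  have H2: "\<And>s i. 0 \<le> s \<Longrightarrow> 0 \<le> i \<Longrightarrow>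
        (\<exists>d>0. ((\<lambda>x. f x i) has_real_derivative d) (at s within {0..})) \<and>
        (\<exists>d\<le>0. ((\<lambda>y. f s y) has_real_derivative d) (at i within {0..}))"
    using HH[THEN conjunct2, THEN conjunct2, THEN conjunct2, THEN conjunct2, THEN conjunct2,
       THEN conjunct2, THEN conjunct1] by blast
  from C2 obtain Dg :: "real \<times> real \<Rightarrow> (real \<times> real) \<Rightarrow>\<^sub>L real" and D2g
    where Dg: "\<And>x. x \<in> Rplus2 \<Longrightarrow> ((\<lambda>(s, i). F s i) has_derivative blinfun_apply (Dg x)) (at x within Rplus2)"
      and D2g: "\<And>x. x \<in> Rplus2 \<Longrightarrow> (Dg has_derivative blinfun_apply (D2g x)) (at x within Rplus2)"
    unfolding C2_on_def by blast
  have cp: "(\<lambda>(s, i). F s i) = (\<lambda>p. F (fst p) (snd p))" by (simp add: fun_eq_iff split_def)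
  have e2: "(S0, I0) \<in> Rplus2" using pos by (simp add: Rplus2_def)
  define DF where "DF = blinfun_apply (Dg (S0, I0))"
  have dF: "((\<lambda>p. F (fst p) (snd p)) has_derivative DF) (at (S0, I0))"
    using Dg[OF e2] Rplus2_at[OF pos] cp by (simp add: DF_def)
  have lin: "linear DF" unfolding DF_def by (simp add: blinfun.bounded_linear_right bounded_linear.linear)
  have p1: "((\<lambda>x. F x I0) has_real_derivative DF (1, 0)) (at S0)"
  proof -
    have "((\<lambda>x. (x, I0)) has_derivative (\<lambda>h. (h, 0))) (at S0)"
      by (auto intro!: derivative_eq_intros)
    from has_derivative_compose[OF this dF]
    have "((\<lambda>x. F x I0) has_derivative (\<lambda>h. DF (h, 0))) (at S0)" by simp
    moreover have "h * DF (1, 0) = DF (h, 0)" for h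
      using linear_scale[OF lin, of h "(1,0)"] by simp
    ultimately show ?thesis
      by (rule has_derivative_imp_has_field_derivative)
  qed
  have p2: "((\<lambda>y. F S0 y) has_real_derivative DF (0, 1)) (at I0)"
  proof -
    have "((\<lambda>y. (S0, y)) has_derivative (\<lambda>h. (0, h))) (at I0)"
      by (auto intro!: derivative_eq_intros)
    from has_derivative_compose[OF this dF]
    have "((\<lambda>y. F S0 y) has_derivative (\<lambda>h. DF (0, h))) (at I0)" by simp
    moreover have "h * DF (0, 1) = DF (0, h)" for h
      using linear_scale[OF lin, of h "(0,1)"] by simp
    ultimately show ?thesis
      by (rule has_derivative_imp_has_field_derivative)
  qed
  have pd1e: "pd1 F S0 I0 = DF (1, 0)" unfolding pd1_def using p1 by (rule DERIV_imp_deriv)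
  have pd2e: "pd2 F S0 I0 = DF (0, 1)" unfolding pd2_def using p2 by (rule DERIV_imp_deriv)
  have DFe: "DF h = fst h * pd1 F S0 I0 + snd h * pd2 F S0 I0" for h
  proof -
    have "h = fst h *\<^sub>R (1, 0) + snd h *\<^sub>R (0, 1)" by (cases h) simp
    then have "DF h = DF (fst h *\<^sub>R (1, 0) + snd h *\<^sub>R (0, 1))" by simp
    also have "\<dots> = fst h * DF (1, 0) + snd h * DF (0, 1)"
      by (simp only: linear_add[OF lin] linear_scale[OF lin] real_scaleR_def)
    also have "\<dots> = fst h * pd1 F S0 I0 + snd h * pd2 F S0 I0"
      using pd1e pd2e by simp
    finally show ?thesis .
  qed
  have "DF = (\<lambda>h. fst h * pd1 F S0 I0 + snd h * pd2 F S0 I0)"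
    by (rule ext) (rule DFe)
  then show "((\<lambda>p. F (fst p) (snd p)) has_derivative (\<lambda>h. fst h * pd1 F S0 I0 + snd h * pd2 F S0 I0)) (at (S0, I0))"
    using dF by simp
  obtain d1 where d1: "d1 > 0" "((\<lambda>x. f x I0) has_real_derivative d1) (at S0 within {0..})"
    using H2[of S0 I0] pos by auto
  obtain d2 where d2: "d2 \<le> 0" "((\<lambda>y. f S0 y) has_real_derivative d2) (at I0 within {0..})"
    using H2[of S0 I0] pos by auto
  have "((\<lambda>x. I0 * f x I0) has_real_derivative I0 * d1) (at S0 within {0..})"
    by (rule DERIV_cmult[OF d1(2)])
  then have "((\<lambda>x. F x I0) has_real_derivative I0 * d1) (at S0 within {0..})"
    by (rule has_field_derivative_transform_within[where d=1]) (use pos Fi in auto)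
  then have "((\<lambda>x. F x I0) has_real_derivative I0 * d1) (at S0)" using at_pos_real[OF pos(1)] by simp
  then have "pd1 F S0 I0 = I0 * d1" unfolding pd1_def by (rule DERIV_imp_deriv)
  then show "pd1 F S0 I0 > 0" using pos d1 by simp
  have "((\<lambda>y. y * f S0 y) has_real_derivative (1 * f S0 I0 + d2 * I0)) (at I0 within {0..})"
    by (rule DERIV_mult[OF DERIV_ident d2(2)])
  then have "((\<lambda>y. F S0 y) has_real_derivative (1 * f S0 I0 + d2 * I0)) (at I0 within {0..})"
    by (rule has_field_derivative_transform_within[where d=1]) (use pos Fi in auto)
  then have "((\<lambda>y. F S0 y) has_real_derivative (1 * f S0 I0 + d2 * I0)) (at I0)" using at_pos_real[OF pos(2)] by simp
  then have "pd2 F S0 I0 = f S0 I0 + d2 * I0" unfolding pd2_def by (simp add: DERIV_imp_deriv)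
  then show "pd2 F S0 I0 \<le> f S0 I0" using pos d2 mult_nonpos_nonneg[of d2 I0] by simp
  fix \<rho> :: real assume r: "0 < \<rho>" "\<rho> < min S0 I0"
  define K where "K = cball (S0, I0) \<rho>"
  have KR: "K \<subseteq> Rplus2" unfolding K_def by (rule cball_Rplus2[OF r])
  have contD: "continuous_on Rplus2 Dg"
    unfolding continuous_on_eq_continuous_within
  proof
    fix x assume "x \<in> Rplus2"
    then show "continuous (at x within Rplus2) Dg" by (rule has_derivative_continuous[OF D2g])
  qed
  have "compact (Dg ` K)"
    by (rule compact_continuous_image[OF continuous_on_subset[OF contD KR]]) (simp add: K_def)
  then have "bounded (Dg ` K)" by (rule compact_imp_bounded)
  then obtain Bd where Bd0: "\<forall>y\<in>Dg ` K. norm y \<le> Bd" unfolding bounded_iff by blast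
  have Bd: "\<And>x. x \<in> K \<Longrightarrow> norm (Dg x) \<le> Bd" using Bd0 by blast
  have "\<forall>p\<in>K. \<forall>q\<in>K. \<bar>F (fst p) (snd p) - F (fst q) (snd q)\<bar> \<le> Bd * norm (p - q)"
  proof (intro ballI)
    fix p q assume pq: "p \<in> K" "q \<in> K"
    have "norm ((\<lambda>(s, i). F s i) p - (\<lambda>(s, i). F s i) q) \<le> Bd * norm (p - q)"
    proof (rule differentiable_bound[where f'="\<lambda>x. blinfun_apply (Dg x)"])
      show "convex K" by (simp add: K_def)
      show "((\<lambda>(s, i). F s i) has_derivative blinfun_apply (Dg x)) (at x within K)" if "x \<in> K" for x
        using Dg[of x] that KR has_derivative_subset by blast
      show "onorm (blinfun_apply (Dg x)) \<le> Bd" if "x \<in> K" for x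
        using Bd[OF that] by (simp add: norm_blinfun.rep_eq)
    qed (use pq in auto)
    then show "\<bar>F (fst p) (snd p) - F (fst q) (snd q)\<bar> \<le> Bd * norm (p - q)"
      by (simp add: split_def)
  qed
  then show "\<exists>L. \<forall>p\<in>cball (S0,I0) \<rho>. \<forall>q\<in>cball (S0,I0) \<rho>.
           \<bar>F (fst p) (snd p) - F (fst q) (snd q)\<bar> \<le> L * norm (p - q)"
    unfolding K_def by blast
qed

context lin4 begin

lemma c_pos:
  assumes eq: "C11 = -a-b-(r+mu)" "C13 = -p1" "C14 = -p2" "C22 = -mu-l" "C24 = -n" "C31 = a"
    "C33 = p1-al1" "C41 = b" "C42 = l" "C44 = p2+n-al2"
  and s: "a > 0" "b > 0" "p1 \<le> al1" "al1 > 0" "p2 \<le> al2 - n" "0 \<le> al2 - n" "l > 0" "n > 0" "r > 0" "mu > 0"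
  shows "c4 > 0" "c1 > 0"
proof -
  define u where "u = al1 - p1"
  define w where "w = al2 - n - p2"
  define be where "be = al2 - n"
  have u: "u \<ge> 0" and w: "w \<ge> 0" and be: "be \<ge> 0" using s by (auto simp: u_def w_def be_def)
  have "c4 = r*l*u*be + b*(mu+l)*u*be + l*n*a*al1 + l*n*u*b + l*n*u*(r+mu) + w*a*(mu+l)*al1
       + w*u*(mu*r+mu*mu+l*mu)"
    unfolding c4_def unfolding eq u_def w_def be_def by (simp add: algebra_simps)
  moreover have "l*n*a*al1 > 0" using s by simp
  moreover have "r*l*u*be \<ge> 0" "b*(mu+l)*u*be \<ge> 0" "l*n*u*b \<ge> 0" "l*n*u*(r+mu) \<ge> 0"
     "w*a*(mu+l)*al1 \<ge> 0" "w*u*(mu*r+mu*mu+l*mu) \<ge> 0"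
    using s u w be by (auto intro!: mult_nonneg_nonneg add_nonneg_nonneg)
  ultimately show "c4 > 0" by linarith
  have "c1 = w + u + (mu + l) + a + b + (r + mu)"
    unfolding c1_def unfolding eq u_def w_def by (simp add: algebra_simps)
  then show "c1 > 0" using s u w by linarith
qed

lemma c3_pos: assumes "c1 > 0" "c4 > 0" "D2 > 0" "D3 > 0" shows "c3 > 0"
proof -
  have "D3 = c3 * D2 - c1^2 * c4" unfolding D3_def D2_def by (simp add: algebra_simps power2_eq_square)
  moreover have "c1^2 * c4 > 0" using assms by simp
  ultimately have "c3 * D2 > 0" using assms by linarith
  then show ?thesis using assms(3) by (simp add: zero_less_mult_iff)
qed

lemma q_eq: "z = (q1 z, q2 z, q3 z, q4 z)"
  by (simp add: q1_def q2_def q3_def q4_def)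

lemma Jm_zero: "Jm 0 = 0" by (simp add: Jm_def q1_def q2_def q3_def q4_def zero_prod_def)

lemma Jm_inj: assumes "c4 \<noteq> 0" shows "\<exists>\<kappa>>0. \<forall>z. norm (Jm z) \<ge> \<kappa> * norm z"
proof -
  have bl: "bounded_linear Jm" using linear_Jm by (simp add: linear_conv_bounded_linear)
  have inj: "z = 0" if "Jm z = 0" for z
  proof -
    have z1: "Jm (Jm z) = 0" "Jm (Jm (Jm z)) = 0" "Jm (Jm (Jm (Jm z))) = 0" using that Jm_zero by simp_all
    have "c4 * q1 z = 0" "c4 * q2 z = 0" "c4 * q3 z = 0" "c4 * q4 z = 0"
      using CH[of z] that z1 by (simp_all add: q1_def q2_def q3_def q4_def)
    then have "q1 z = 0" "q2 z = 0" "q3 z = 0" "q4 z = 0" using assms by simp_all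
    then show "z = 0" using q_eq[of z] by (simp add: zero_prod_def)
  qed
  have "\<exists>e>0. \<forall>x\<in>UNIV. norm (Jm x) \<ge> e * norm x"
    by (rule injective_imp_isometric[OF closed_UNIV subspace_UNIV bl]) (use inj in auto)
  then show ?thesis by auto
qed

end

lemma rhs_q: "model_rhs Lam mu r k gamma1 gamma2 v1 v2 F1 F2 = (\<lambda>y.
   (Lam - F1 (q1 y) (q3 y) - F2 (q1 y) (q4 y) - (r + mu) * q1 y,
    r * q1 y - (mu + k * q4 y) * q2 y,
    F1 (q1 y) (q3 y) - (gamma1 + v1 + mu) * q3 y,
    F2 (q1 y) (q4 y) + k * q4 y * q2 y - (gamma2 + v2 + mu) * q4 y))"
  by (simp add: model_rhs_def fun_eq_iff split_def q1_def q2_def q3_def q4_def)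

lemma q_le: "\<bar>q1 z\<bar> \<le> norm z" "\<bar>q2 z\<bar> \<le> norm z" "\<bar>q3 z\<bar> \<le> norm z" "\<bar>q4 z\<bar> \<le> norm z"
  "norm (q1 z, q3 z) \<le> norm z" "norm (q1 z, q4 z) \<le> norm z"
proof -
  have n: "(norm z)^2 = (q1 z)^2 + (q2 z)^2 + (q3 z)^2 + (q4 z)^2" by (rule norm4)
  have a: "\<bar>t\<bar> \<le> norm z" if "t^2 \<le> (norm z)^2" for t
    using that by (metis abs_norm_cancel power2_le_iff_abs_le norm_ge_zero)
  show "\<bar>q1 z\<bar> \<le> norm z" "\<bar>q2 z\<bar> \<le> norm z" "\<bar>q3 z\<bar> \<le> norm z" "\<bar>q4 z\<bar> \<le> norm z"
    by (intro a, use n in \<open>simp add: add_nonneg_nonneg\<close>)+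
  have b: "norm p \<le> norm z" if "(norm p)^2 \<le> (norm z)^2" for p :: "real \<times> real"
    using that by (simp add: power2_le_iff_abs_le)
  show "norm (q1 z, q3 z) \<le> norm z" "norm (q1 z, q4 z) \<le> norm z"
    by (intro b, use n in \<open>simp add: norm_Pair\<close>)+
qed

lemma q_diff: "q1 (x - y) = q1 x - q1 y" "q2 (x - y) = q2 x - q2 y"
  "q3 (x - y) = q3 x - q3 y" "q4 (x - y) = q4 x - q4 y"
  by (simp_all add: q1_def q2_def q3_def q4_def)

lemma rhs_deriv:
  assumes H1: "incidence_ok F1 f1" and H2: "incidence_ok F2 f2"
    and pos: "Ss > 0" "I1s > 0" "I2s > 0"
  shows "(model_rhs Lam mu r k gamma1 gamma2 v1 v2 F1 F2 has_derivative
     lin4.Jm (- pd1 F1 Ss I1s - pd1 F2 Ss I2s - (r + mu)) (- pd2 F1 Ss I1s) (- pd2 F2 Ss I2s)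
        (- mu - k * I2s) (- k * V1s) (pd1 F1 Ss I1s) (pd2 F1 Ss I1s - (gamma1 + v1 + mu))
        (pd1 F2 Ss I2s) (k * I2s) (pd2 F2 Ss I2s + k * V1s - (gamma2 + v2 + mu)) r) (at (Ss, V1s, I1s, I2s))"
proof -
  define e where "e = (Ss, V1s, I1s, I2s)"
  have d1: "((\<lambda>y. F1 (q1 y) (q3 y)) has_derivative (\<lambda>h. q1 h * pd1 F1 Ss I1s + q3 h * pd2 F1 Ss I1s)) (at e)"
  proof -
    have i: "((\<lambda>y. (q1 y, q3 y)) has_derivative (\<lambda>h. (q1 h, q3 h))) (at e)"
      unfolding q1_def q3_def by (auto intro!: derivative_eq_intros)
    have "(q1 e, q3 e) = (Ss, I1s)" by (simp add: e_def q1_def q3_def)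
    then have o: "((\<lambda>p. F1 (fst p) (snd p)) has_derivative (\<lambda>h. fst h * pd1 F1 Ss I1s + snd h * pd2 F1 Ss I1s)) (at (q1 e, q3 e))"
      using F_facts(1)[OF H1 pos(1,2)] by simp
    show ?thesis using has_derivative_compose[OF i o] by simp
  qed
  have d2: "((\<lambda>y. F2 (q1 y) (q4 y)) has_derivative (\<lambda>h. q1 h * pd1 F2 Ss I2s + q4 h * pd2 F2 Ss I2s)) (at e)"
  proof -
    have i: "((\<lambda>y. (q1 y, q4 y)) has_derivative (\<lambda>h. (q1 h, q4 h))) (at e)"
      unfolding q1_def q4_def by (auto intro!: derivative_eq_intros)
    have "(q1 e, q4 e) = (Ss, I2s)" by (simp add: e_def q1_def q4_def)
    then have o: "((\<lambda>p. F2 (fst p) (snd p)) has_derivative (\<lambda>h. fst h * pd1 F2 Ss I2s + snd h * pd2 F2 Ss I2s)) (at (q1 e, q4 e))"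
      using F_facts(1)[OF H2 pos(1,3)] by simp
    show ?thesis using has_derivative_compose[OF i o] by simp
  qed
  have dq: "(q1 has_derivative q1) (at e)" "(q2 has_derivative q2) (at e)"
    "(q3 has_derivative q3) (at e)" "(q4 has_derivative q4) (at e)"
    unfolding q1_def q2_def q3_def q4_def by (auto intro!: derivative_eq_intros)
  have "(model_rhs Lam mu r k gamma1 gamma2 v1 v2 F1 F2 has_derivative (\<lambda>h.
     (0 - (q1 h * pd1 F1 Ss I1s + q3 h * pd2 F1 Ss I1s) - (q1 h * pd1 F2 Ss I2s + q4 h * pd2 F2 Ss I2s) - (r + mu) * q1 h,
      r * q1 h - ((mu + k * q4 e) * q2 h + (0 + k * q4 h) * q2 e),
      (q1 h * pd1 F1 Ss I1s + q3 h * pd2 F1 Ss I1s) - (gamma1 + v1 + mu) * q3 h,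
      (q1 h * pd1 F2 Ss I2s + q4 h * pd2 F2 Ss I2s) + (k * q4 e * q2 h + k * q4 h * q2 e) - (gamma2 + v2 + mu) * q4 h)))
     (at e)"
    unfolding rhs_q
    by (intro has_derivative_Pair has_derivative_diff has_derivative_add has_derivative_const
        has_derivative_mult has_derivative_mult_right d1 d2 dq)
  then have "(model_rhs Lam mu r k gamma1 gamma2 v1 v2 F1 F2 has_derivative (\<lambda>h.
     (0 - (q1 h * pd1 F1 Ss I1s + q3 h * pd2 F1 Ss I1s) - (q1 h * pd1 F2 Ss I2s + q4 h * pd2 F2 Ss I2s) - (r + mu) * q1 h,
      r * q1 h - ((mu + k * q4 e) * q2 h + (0 + k * q4 h) * q2 e),
      (q1 h * pd1 F1 Ss I1s + q3 h * pd2 F1 Ss I1s) - (gamma1 + v1 + mu) * q3 h,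
      (q1 h * pd1 F2 Ss I2s + q4 h * pd2 F2 Ss I2s) + (k * q4 e * q2 h + k * q4 h * q2 e) - (gamma2 + v2 + mu) * q4 h)))
     (at (Ss, V1s, I1s, I2s))" by (simp only: e_def)
  then show ?thesis
    by (rule has_derivative_eq_rhs)
       (simp add: fun_eq_iff lin4.Jm_def e_def q1_def q2_def q3_def q4_def algebra_simps)
qed

lemma norm4_le: "norm (a::real, b::real, c::real, d::real) \<le> \<bar>a\<bar> + \<bar>b\<bar> + \<bar>c\<bar> + \<bar>d\<bar>"
proof -
  have "norm (a, b, c, d) \<le> norm a + norm (b, c, d)" by (rule norm_Pair_le)
  also have "norm (b, c, d) \<le> norm b + norm (c, d)" by (rule norm_Pair_le)
  also have "norm (c, d) \<le> norm c + norm d" by (rule norm_Pair_le)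
  finally show ?thesis by simp
qed

lemma prod_diff_bound:
  fixes a b a' b' R N :: real
  assumes "\<bar>a\<bar> \<le> R" "\<bar>b'\<bar> \<le> R" "\<bar>a - a'\<bar> \<le> N" "\<bar>b - b'\<bar> \<le> N"
  shows "\<bar>a * b - a' * b'\<bar> \<le> 2 * R * N"
proof -
  have "a * b - a' * b' = a * (b - b') + b' * (a - a')" by (simp add: algebra_simps)
  then have "\<bar>a * b - a' * b'\<bar> \<le> \<bar>a\<bar> * \<bar>b - b'\<bar> + \<bar>b'\<bar> * \<bar>a - a'\<bar>"
    by (simp add: abs_mult[symmetric] abs_triangle_ineq)
  also have "\<dots> \<le> R * N + R * N"
    using assms by (intro add_mono mult_mono) auto
  finally show ?thesis by (simp add: mult_ac)
qed

lemma rhs_lip: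
  assumes H1: "incidence_ok F1 f1" and H2: "incidence_ok F2 f2"
    and pos: "Ss > 0" "I1s > 0" "I2s > 0"
    and rho: "0 < \<rho>" "\<rho> < min Ss I1s" "\<rho> < min Ss I2s"
  shows "\<exists>Lg>0. \<forall>y\<in>cball (Ss, V1s, I1s, I2s) \<rho>. \<forall>y'\<in>cball (Ss, V1s, I1s, I2s) \<rho>.
     norm (model_rhs Lam mu r k gamma1 gamma2 v1 v2 F1 F2 y - model_rhs Lam mu r k gamma1 gamma2 v1 v2 F1 F2 y')
       \<le> Lg * norm (y - y')"
proof -
  define e where "e = (Ss, V1s, I1s, I2s)"
  obtain L1 where L1: "\<forall>p\<in>cball (Ss,I1s) \<rho>. \<forall>q\<in>cball (Ss,I1s) \<rho>.
           \<bar>F1 (fst p) (snd p) - F1 (fst q) (snd q)\<bar> \<le> L1 * norm (p - q)"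
    using F_facts(4)[OF H1 pos(1,2) rho(1,2)] by blast
  obtain L2 where L2: "\<forall>p\<in>cball (Ss,I2s) \<rho>. \<forall>q\<in>cball (Ss,I2s) \<rho>.
           \<bar>F2 (fst p) (snd p) - F2 (fst q) (snd q)\<bar> \<le> L2 * norm (p - q)"
    using F_facts(4)[OF H2 pos(1,3) rho(1,3)] by blast
  define R where "R = norm e + \<rho>"
  define al1 where "al1 = gamma1 + v1 + mu"
  define al2 where "al2 = gamma2 + v2 + mu"
  define Lg where "Lg = (\<bar>L1\<bar> + \<bar>L2\<bar> + \<bar>r + mu\<bar>) + (\<bar>r\<bar> + \<bar>mu\<bar> + \<bar>k\<bar> * (2 * R))
     + (\<bar>L1\<bar> + \<bar>al1\<bar>) + (\<bar>L2\<bar> + \<bar>k\<bar> * (2 * R) + \<bar>al2\<bar>) + 1"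
  have R0: "R \<ge> 0" using rho by (simp add: R_def)
  have Lg: "Lg > 0" unfolding Lg_def using R0 by (smt (verit) abs_ge_zero mult_nonneg_nonneg)
  have main: "norm (model_rhs Lam mu r k gamma1 gamma2 v1 v2 F1 F2 y - model_rhs Lam mu r k gamma1 gamma2 v1 v2 F1 F2 y')
       \<le> Lg * norm (y - y')" if y: "y \<in> cball e \<rho>" and y': "y' \<in> cball e \<rho>" for y y'
  proof -
    define N where "N = norm (y - y')"
    have N0: "N \<ge> 0" by (simp add: N_def)
    have Ry: "norm y \<le> R" "norm y' \<le> R"
      using y y' norm_triangle_sub[of y e] norm_triangle_sub[of y' e]
      by (auto simp: R_def dist_norm norm_minus_commute)
    have qR: "\<bar>q2 y\<bar> \<le> R" "\<bar>q4 y\<bar> \<le> R" "\<bar>q2 y'\<bar> \<le> R" "\<bar>q4 y'\<bar> \<le> R"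
      using q_le[of y] q_le[of y'] Ry by linarith+
    have qN: "\<bar>q1 y - q1 y'\<bar> \<le> N" "\<bar>q2 y - q2 y'\<bar> \<le> N" "\<bar>q3 y - q3 y'\<bar> \<le> N" "\<bar>q4 y - q4 y'\<bar> \<le> N"
      "norm ((q1 y, q3 y) - (q1 y', q3 y')) \<le> N" "norm ((q1 y, q4 y) - (q1 y', q4 y')) \<le> N"
      using q_le[of "y - y'"] unfolding N_def q_diff by simp_all
    have inb: "(q1 z, q3 z) \<in> cball (Ss, I1s) \<rho>" "(q1 z, q4 z) \<in> cball (Ss, I2s) \<rho>" if "z \<in> cball e \<rho>" for z
    proof -
      have "norm (z - e) \<le> \<rho>" using that by (simp add: dist_norm norm_minus_commute)
      have "dist (Ss, I1s) (q1 z, q3 z) = norm ((q1 z, q3 z) - (Ss, I1s))" unfolding dist_norm by (rule norm_minus_commute)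
      also have "(q1 z, q3 z) - (Ss, I1s) = (q1 (z - e), q3 (z - e))" by (simp add: e_def q1_def q2_def q3_def q4_def)
      finally have d1: "dist (Ss, I1s) (q1 z, q3 z) = norm (q1 (z - e), q3 (z - e))" .
      have "dist (Ss, I2s) (q1 z, q4 z) = norm ((q1 z, q4 z) - (Ss, I2s))" unfolding dist_norm by (rule norm_minus_commute)
      also have "(q1 z, q4 z) - (Ss, I2s) = (q1 (z - e), q4 (z - e))" by (simp add: e_def q1_def q2_def q3_def q4_def)
      finally have d2: "dist (Ss, I2s) (q1 z, q4 z) = norm (q1 (z - e), q4 (z - e))" .
      show "(q1 z, q3 z) \<in> cball (Ss, I1s) \<rho>" "(q1 z, q4 z) \<in> cball (Ss, I2s) \<rho>"
        unfolding mem_cball d1 d2 using q_le(5,6)[of "z - e"] \<open>norm (z - e) \<le> \<rho>\<close> by linarith+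
    qed
    have f1: "\<bar>F1 (q1 y) (q3 y) - F1 (q1 y') (q3 y')\<bar> \<le> \<bar>L1\<bar> * N"
    proof -
      have "\<bar>F1 (q1 y) (q3 y) - F1 (q1 y') (q3 y')\<bar> \<le> L1 * norm ((q1 y, q3 y) - (q1 y', q3 y'))"
        using L1 inb(1)[OF y] inb(1)[OF y'] by fastforce
      also have "\<dots> \<le> \<bar>L1\<bar> * N" using qN(5) by (meson abs_ge_self abs_ge_zero mult_mono norm_ge_zero order_trans)
      finally show ?thesis .
    qed
    have f2: "\<bar>F2 (q1 y) (q4 y) - F2 (q1 y') (q4 y')\<bar> \<le> \<bar>L2\<bar> * N"
    proof -
      have "\<bar>F2 (q1 y) (q4 y) - F2 (q1 y') (q4 y')\<bar> \<le> L2 * norm ((q1 y, q4 y) - (q1 y', q4 y'))"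
        using L2 inb(2)[OF y] inb(2)[OF y'] by fastforce
      also have "\<dots> \<le> \<bar>L2\<bar> * N" using qN(6) by (meson abs_ge_self abs_ge_zero mult_mono norm_ge_zero order_trans)
      finally show ?thesis .
    qed
    have pr: "\<bar>q4 y * q2 y - q4 y' * q2 y'\<bar> \<le> 2 * R * N"
      by (rule prod_diff_bound) (use qR qN in auto)
    define A1 where "A1 = F1 (q1 y) (q3 y) - F1 (q1 y') (q3 y')"
    define A2 where "A2 = F2 (q1 y) (q4 y) - F2 (q1 y') (q4 y')"
    define P where "P = q4 y * q2 y - q4 y' * q2 y'"
    have eq: "model_rhs Lam mu r k gamma1 gamma2 v1 v2 F1 F2 y - model_rhs Lam mu r k gamma1 gamma2 v1 v2 F1 F2 y'
      = (- A1 - A2 - (r + mu) * (q1 y - q1 y'),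
         r * (q1 y - q1 y') - mu * (q2 y - q2 y') - k * P,
         A1 - al1 * (q3 y - q3 y'),
         A2 + k * P - al2 * (q4 y - q4 y'))"
      unfolding rhs_q A1_def A2_def P_def al1_def al2_def by (simp add: algebra_simps)
    have b1: "\<bar>- A1 - A2 - (r + mu) * (q1 y - q1 y')\<bar> \<le> (\<bar>L1\<bar> + \<bar>L2\<bar> + \<bar>r + mu\<bar>) * N"
    proof -
      have "\<bar>(r + mu) * (q1 y - q1 y')\<bar> \<le> \<bar>r + mu\<bar> * N" using qN(1) by (simp add: abs_mult mult_left_mono)
      then show ?thesis using f1[folded A1_def] f2[folded A2_def] unfolding abs_le_iff distrib_right by linarith
    qed
    have b2: "\<bar>r * (q1 y - q1 y') - mu * (q2 y - q2 y') - k * P\<bar> \<le> (\<bar>r\<bar> + \<bar>mu\<bar> + \<bar>k\<bar> * (2 * R)) * N"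
    proof -
      have "\<bar>r * (q1 y - q1 y')\<bar> \<le> \<bar>r\<bar> * N" using qN(1) by (simp add: abs_mult mult_left_mono)
      moreover have "\<bar>mu * (q2 y - q2 y')\<bar> \<le> \<bar>mu\<bar> * N" using qN(2) by (simp add: abs_mult mult_left_mono)
      moreover have "\<bar>k * P\<bar> \<le> \<bar>k\<bar> * (2 * R * N)" using pr unfolding P_def by (simp add: abs_mult mult_left_mono)
      ultimately show ?thesis unfolding abs_le_iff distrib_right by linarith
    qed
    have b3: "\<bar>A1 - al1 * (q3 y - q3 y')\<bar> \<le> (\<bar>L1\<bar> + \<bar>al1\<bar>) * N"
    proof -
      have "\<bar>al1 * (q3 y - q3 y')\<bar> \<le> \<bar>al1\<bar> * N" using qN(3) by (simp add: abs_mult mult_left_mono)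
      then show ?thesis using f1[folded A1_def] unfolding abs_le_iff distrib_right by linarith
    qed
    have b4: "\<bar>A2 + k * P - al2 * (q4 y - q4 y')\<bar> \<le> (\<bar>L2\<bar> + \<bar>k\<bar> * (2 * R) + \<bar>al2\<bar>) * N"
    proof -
      have "\<bar>al2 * (q4 y - q4 y')\<bar> \<le> \<bar>al2\<bar> * N" using qN(4) by (simp add: abs_mult mult_left_mono)
      moreover have "\<bar>k * P\<bar> \<le> \<bar>k\<bar> * (2 * R * N)" using pr unfolding P_def by (simp add: abs_mult mult_left_mono)
      ultimately show ?thesis using f2[folded A2_def] unfolding abs_le_iff distrib_right by linarith
    qed
    have "norm (model_rhs Lam mu r k gamma1 gamma2 v1 v2 F1 F2 y - model_rhs Lam mu r k gamma1 gamma2 v1 v2 F1 F2 y')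
       \<le> (\<bar>L1\<bar> + \<bar>L2\<bar> + \<bar>r + mu\<bar>) * N + (\<bar>r\<bar> + \<bar>mu\<bar> + \<bar>k\<bar> * (2 * R)) * N
          + (\<bar>L1\<bar> + \<bar>al1\<bar>) * N + (\<bar>L2\<bar> + \<bar>k\<bar> * (2 * R) + \<bar>al2\<bar>) * N"
      unfolding eq using norm4_le b1 b2 b3 b4 by (smt (verit))
    also have "\<dots> \<le> Lg * N" unfolding Lg_def using N0 by (simp add: algebra_simps)
    finally show ?thesis by (simp add: N_def)
  qed
  show ?thesis using Lg main unfolding e_def by blast
qed

theorem mainTheorem11:
  fixes Lam mu r k gamma1 gamma2 v1 v2 :: real
    and F1 f1 F2 f2 :: "real \<Rightarrow> real \<Rightarrow> real"
    and Ss V1s I1s I2s :: real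
  assumes pos: "Lam > 0" "mu > 0" "r > 0" "k > 0" "gamma1 > 0" "gamma2 > 0"
    and nonneg: "v1 \<ge> 0" "v2 \<ge> 0"
    and H1: "incidence_ok F1 f1" and H2: "incidence_ok F2 f2"
    and Epos: "Ss > 0" "V1s > 0" "I1s > 0" "I2s > 0"
    and Eeq: "model_rhs Lam mu r k gamma1 gamma2 v1 v2 F1 F2 (Ss, V1s, I1s, I2s) = 0"
  defines "lam \<equiv> r + mu"
    and "alpha1 \<equiv> gamma1 + v1 + mu"
    and "alpha2 \<equiv> gamma2 + v2 + mu"
  defines "C11 \<equiv> - pd1 F1 Ss I1s - pd1 F2 Ss I2s - lam"
    and "C13 \<equiv> - pd2 F1 Ss I1s"
    and "C14 \<equiv> - pd2 F2 Ss I2s"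
    and "C22 \<equiv> - mu - k * I2s"
    and "C24 \<equiv> - k * V1s"
    and "C31 \<equiv> pd1 F1 Ss I1s"
    and "C33 \<equiv> pd2 F1 Ss I1s - alpha1"
    and "C41 \<equiv> pd1 F2 Ss I2s"
    and "C42 \<equiv> k * I2s"
    and "C44 \<equiv> pd2 F2 Ss I2s + k * V1s - alpha2"
  defines "c1 \<equiv> - C44 - C33 - C22 - C11"
    and "c2 \<equiv> - C41 * C14 - C42 * C24 + C44 * C33 + C44 * C22 + C44 * C11
              - C31 * C13 + C33 * C22 + C33 * C11 + C22 * C11"
    and "c3 \<equiv> - r * C42 * C14 + C41 * C14 * C33 + C41 * C14 * C22 + C42 * C24 * C33
              + C42 * C24 * C11 + C44 * C31 * C13 - C44 * C33 * C22 - C44 * C33 * C11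
              - C44 * C22 * C11 + C31 * C13 * C22 - C33 * C22 * C11"
    and "c4 \<equiv> r * C42 * C14 * C33 - C41 * C14 * C33 * C22 + C42 * C24 * C31 * C13
              - C42 * C24 * C33 * C11 - C44 * C31 * C13 * C22 + C44 * C33 * C22 * C11"
  assumes RH1: "c1 * c2 - c3 > 0"
    and RH2: "c1 * c2 * c3 - c3 ^ 2 - c1 ^ 2 * c4 > 0"
  shows "loc_asym_stable (model_rhs Lam mu r k gamma1 gamma2 v1 v2 F1 F2) Rplus4 (Ss, V1s, I1s, I2s)"
proof -
  define g where "g = model_rhs Lam mu r k gamma1 gamma2 v1 v2 F1 F2"
  define e where "e = (Ss, V1s, I1s, I2s)"
  interpret L: lin4 C11 C13 C14 C22 C24 C31 C33 C41 C42 C44 r .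
  have cc: "L.c1 = c1" "L.c2 = c2" "L.c3 = c3" "L.c4 = c4"
    by (simp_all add: L.c1_def L.c2_def L.c3_def L.c4_def c1_def c2_def c3_def c4_def)
  have eqs: "Lam - F1 Ss I1s - F2 Ss I2s - (r + mu) * Ss = 0" "r * Ss - (mu + k * I2s) * V1s = 0"
     "F1 Ss I1s - (gamma1 + v1 + mu) * I1s = 0" "F2 Ss I2s + k * I2s * V1s - (gamma2 + v2 + mu) * I2s = 0"
    using Eeq by (simp_all add: model_rhs_def zero_prod_def)
  note HH1 = H1[unfolded incidence_ok_def]
  note HH2 = H2[unfolded incidence_ok_def]
  have F1e: "F1 Ss I1s = I1s * f1 Ss I1s" using HH1[THEN conjunct1] Epos by simp
  have F2e: "F2 Ss I2s = I2s * f2 Ss I2s" using HH2[THEN conjunct1] Epos by simp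
  have f2nn: "0 \<le> f2 Ss I2s" using HH2[THEN conjunct2, THEN conjunct2, THEN conjunct2, THEN conjunct1] Epos by simp
  have f1v: "f1 Ss I1s = alpha1"
  proof -
    have "I1s * f1 Ss I1s = I1s * alpha1" using eqs(3) F1e by (simp add: alpha1_def algebra_simps)
    then show ?thesis using Epos by simp
  qed
  have f2v: "f2 Ss I2s = alpha2 - k * V1s"
  proof -
    have "I2s * f2 Ss I2s = I2s * (alpha2 - k * V1s)" using eqs(4) F2e by (simp add: alpha2_def algebra_simps)
    then show ?thesis using Epos by simp
  qed
  have fa: "pd1 F1 Ss I1s > 0" "pd2 F1 Ss I1s \<le> f1 Ss I1s"
    using F_facts(2,3)[OF H1 Epos(1,3)] by auto
  have fb: "pd1 F2 Ss I2s > 0" "pd2 F2 Ss I2s \<le> f2 Ss I2s"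
    using F_facts(2,3)[OF H2 Epos(1,4)] by auto
  have al1: "alpha1 > 0" using pos nonneg by (simp add: alpha1_def)
  have pp1: "pd2 F1 Ss I1s \<le> alpha1" using fa f1v by simp
  have pp2: "pd2 F2 Ss I2s \<le> alpha2 - k * V1s" using fb f2v by simp
  have pp3: "0 \<le> alpha2 - k * V1s" using f2nn f2v by simp
  note cp = L.c_pos[of "pd1 F1 Ss I1s" "pd1 F2 Ss I2s" mu "pd2 F1 Ss I1s"
        "pd2 F2 Ss I2s" "k * I2s" "k * V1s" alpha1 alpha2]
  have cpre: "C11 = - pd1 F1 Ss I1s - pd1 F2 Ss I2s - (r + mu)" "C13 = - pd2 F1 Ss I1s" "C14 = - pd2 F2 Ss I2s"
    "C22 = - mu - k * I2s" "C24 = - (k * V1s)" "C31 = pd1 F1 Ss I1s" "C33 = pd2 F1 Ss I1s - alpha1"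
    "C41 = pd1 F2 Ss I2s" "C42 = k * I2s" "C44 = pd2 F2 Ss I2s + k * V1s - alpha2"
    by (simp_all add: C11_def C13_def C14_def C22_def C24_def C31_def C33_def C41_def C42_def C44_def lam_def)
  have kk: "0 < k * I2s" "0 < k * V1s" using pos Epos by simp_all
  have cpos: "L.c4 > 0" "L.c1 > 0"
    using cp(1)[OF cpre fa(1) fb(1) pp1 al1 pp2 pp3 kk pos(3) pos(2)]
      cp(2)[OF cpre fa(1) fb(1) pp1 al1 pp2 pp3 kk pos(3) pos(2)] by simp_all
  have D2p: "L.D2 > 0" using RH1 cc by (simp add: L.D2_def)
  have D3p: "L.D3 > 0" using RH2 cc by (simp add: L.D3_def)
  have c3p: "L.c3 > 0" by (rule L.c3_pos[OF cpos(2,1) D2p D3p])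
  define mm where "mm = L.c4 * L.D3 / L.c3"
  have mm: "mm > 0" unfolding mm_def using cpos c3p D3p by simp
  have Bpos: "\<And>z. L.Bf z z \<ge> mm * (norm z)^2"
    unfolding mm_def by (rule L.Bf_pos[OF cpos(2) c3p cpos(1) D3p])
  obtain K0 where K0: "K0 \<ge> 0" "\<And>a b. norm (L.Bf a b) \<le> norm a * norm b * K0"
    using bounded_bilinear.nonneg_bounded[OF L.bbl_Bf] by blast
  define KB where "KB = K0 + 1"
  have KB: "KB > 0" using K0 by (simp add: KB_def)
  have Bbd: "\<bar>L.Bf a b\<bar> \<le> KB * norm a * norm b" for a b
  proof -
    have "\<bar>L.Bf a b\<bar> \<le> norm a * norm b * K0" using K0(2)[of a b] by simp
    also have "\<dots> \<le> norm a * norm b * KB" by (intro mult_left_mono) (auto simp: KB_def)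
    finally show ?thesis by (simp add: mult_ac)
  qed
  have Bup: "L.Bf z z \<le> KB * (norm z)^2" for z
  proof -
    have "L.Bf z z \<le> KB * norm z * norm z" using Bbd[of z z] by (rule order.trans[OF abs_ge_self])
    then show ?thesis by (simp add: power2_eq_square mult.assoc)
  qed
  have "\<exists>\<kappa>>0. \<forall>z. norm (L.Jm z) \<ge> \<kappa> * norm z" by (rule L.Jm_inj) (use cpos(1) in simp)
  then obtain \<kappa> where kap: "\<kappa> > 0" "\<And>z. norm (L.Jm z) \<ge> \<kappa> * norm z" by blast
  define \<gamma> where "\<gamma> = L.D3 * \<kappa>^2 / 2"
  have gam: "\<gamma> > 0" unfolding \<gamma>_def using D3p kap by simp
  have deriv: "(g has_derivative L.Jm) (at e)"
    unfolding g_def e_def C11_def C13_def C14_def C22_def C24_def C31_def C33_def C41_def C42_def C44_def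
      lam_def alpha1_def alpha2_def
    by (rule rhs_deriv[OF H1 H2 Epos(1,3,4)])
  have ge: "g e = 0" using Eeq by (simp add: g_def e_def)
  have "\<forall>ee>0. \<exists>d>0. \<forall>y. norm (y - e) < d \<longrightarrow> norm (g y - g e - L.Jm (y - e)) \<le> ee * norm (y - e)"
    using deriv unfolding has_derivative_at_alt by (rule conjunct2)
  moreover have "\<gamma> / KB > 0" using gam KB by simp
  ultimately have "\<exists>d>0. \<forall>y. norm (y - e) < d \<longrightarrow> norm (g y - g e - L.Jm (y - e)) \<le> \<gamma> / KB * norm (y - e)"
    by blast
  then obtain d0 where d0: "d0 > 0" "\<And>y. norm (y - e) < d0 \<Longrightarrow> norm (g y - g e - L.Jm (y - e)) \<le> \<gamma> / KB * norm (y - e)"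
    by blast
  have strict0: "L.Bf (y - e) (g y) \<le> - \<gamma> * (norm (y - e))^2" if y: "norm (y - e) < d0" for y
  proof -
    define z where "z = y - e"
    define Rm where "Rm = g y - L.Jm z"
    have gy: "g y = L.Jm z + Rm" by (simp add: Rm_def)
    have Rm: "norm Rm \<le> \<gamma> / KB * norm z" using d0(2)[OF y] ge by (simp add: Rm_def z_def)
    have "L.Bf z (g y) = L.Bf z (L.Jm z) + L.Bf z Rm"
      unfolding gy by (rule linear_add[OF L.linear_Bf])
    also have "L.Bf z (L.Jm z) = - L.D3 * (norm (L.Jm z))^2" by (rule L.Bf_J)
    also have "(norm (L.Jm z))^2 \<ge> \<kappa>^2 * (norm z)^2"
    proof -
      have "(\<kappa> * norm z)^2 \<le> (norm (L.Jm z))^2"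
        using kap by (intro power_mono) auto
      then show ?thesis by (simp add: power_mult_distrib)
    qed
    then have "- L.D3 * (norm (L.Jm z))^2 \<le> - L.D3 * (\<kappa>^2 * (norm z)^2)"
      using D3p by simp
    moreover have "L.Bf z Rm \<le> \<gamma> * (norm z)^2"
    proof -
      have "L.Bf z Rm \<le> KB * norm z * norm Rm" using Bbd[of z Rm] by simp
      also have "\<dots> \<le> KB * norm z * (\<gamma> / KB * norm z)"
        using Rm KB by (intro mult_left_mono) auto
      also have "\<dots> = \<gamma> * (norm z)^2" using KB by (simp add: power2_eq_square)
      finally show ?thesis .
    qed
    moreover have "- L.D3 * (\<kappa>^2 * (norm z)^2) = - 2 * \<gamma> * (norm z)^2" by (simp add: \<gamma>_def)
    ultimately show ?thesis unfolding z_def by linarith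
  qed
  define m0 where "m0 = min Ss (min V1s (min I1s I2s))"
  have m0: "m0 > 0" using Epos by (simp add: m0_def)
  define \<rho> where "\<rho> = min d0 (m0 / 2)"
  have rho: "\<rho> > 0" "\<rho> \<le> d0" "\<rho> < m0" using d0 m0 by (auto simp: \<rho>_def)
  have strict: "\<And>y. norm (y - e) < \<rho> \<Longrightarrow> L.Bf (y - e) (g y) \<le> - \<gamma> * (norm (y - e))^2"
    using strict0 rho by simp
  have dec: "\<And>y. norm (y - e) < \<rho> \<Longrightarrow> L.Bf (y - e) (g y) \<le> 0"
  proof -
    fix y assume yr: "norm (y - e) < \<rho>"
    have "- \<gamma> * (norm (y - e))^2 \<le> 0" using gam by simp
    with strict[OF yr] show "L.Bf (y - e) (g y) \<le> 0" by linarith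
  qed
  have inX: "y \<in> Rplus4" if "norm (y - e) \<le> \<rho>" for y
  proof -
    have "\<bar>q1 (y - e)\<bar> < m0" "\<bar>q2 (y - e)\<bar> < m0" "\<bar>q3 (y - e)\<bar> < m0" "\<bar>q4 (y - e)\<bar> < m0"
      using q_le[of "y - e"] that rho by linarith+
    then have "q1 y > 0" "q2 y > 0" "q3 y > 0" "q4 y > 0"
      unfolding q_diff by (auto simp: e_def q1_def q2_def q3_def q4_def m0_def abs_less_iff)
    then show ?thesis by (cases y) (auto simp: Rplus4_def q1_def q2_def q3_def q4_def)
  qed
  define s where "s = sqrt (mm / (2 * KB))"
  have s: "s > 0" "s^2 = mm / (2 * KB)" using mm KB by (auto simp: s_def)
  have initb: "KB * (norm (x0 - e))^2 < mm * \<epsilon>'^2" if "norm (x0 - e) < \<epsilon>' * s" for x0 \<epsilon>'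
  proof -
    have "(norm (x0 - e))^2 < (\<epsilon>' * s)^2"
      using that by (intro power_strict_mono) auto
    also have "\<dots> = \<epsilon>'^2 * (mm / (2 * KB))" using s by (simp add: power_mult_distrib)
    finally have "KB * (norm (x0 - e))^2 < KB * (\<epsilon>'^2 * (mm / (2 * KB)))"
      using KB by (rule mult_strict_left_mono)
    also have "\<dots> = mm * \<epsilon>'^2 / 2" using KB by (simp add: field_simps)
    also have "\<dots> \<le> mm * \<epsilon>'^2" using mm by simp
    finally show ?thesis .
  qed
  have cont_der: "continuous_on J x" if "\<forall>t\<in>J. (x has_vector_derivative h t) (at t within J)" for x J h
    unfolding continuous_on_eq_continuous_within
  proof
    fix t assume "t \<in> J"
    then show "continuous (at t within J) x" using that by (auto intro: has_vector_derivative_continuous)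
  qed
  have cont_sol: "continuous_on J x" if "\<forall>t\<in>J. (x has_vector_derivative g (x t)) (at t within J)" for x J
    using that by (rule cont_der)
  have stab: "\<forall>t\<in>{0..<T}. norm (x t - e) < \<epsilon>'"
    if "0 < \<epsilon>'" "\<epsilon>' \<le> \<rho>" "ode_sol g Rplus4 {0..<T} x" "norm (x 0 - e) < \<epsilon>' * s" for \<epsilon>' x T
  proof (rule lyap_stay[OF L.bbl_Bf L.Bf_sym Bpos mm Bup dec])
    show "continuous_on {0..<T} x" using that(3) unfolding ode_sol_def by (intro cont_sol) simp
    show "\<And>t. t \<in> {0..<T} \<Longrightarrow> norm (x t - e) < \<rho> \<Longrightarrow> (x has_vector_derivative g (x t)) (at t within {0..<T})"
      using that(3) unfolding ode_sol_def by simp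
    show "KB * (norm (x 0 - e))^2 < mm * \<epsilon>'^2" by (rule initb[OF that(4)])
  qed (use that in auto)
  show ?thesis
    unfolding loc_asym_stable_def g_def[symmetric]
  proof (intro conjI)
    show "(Ss, V1s, I1s, I2s) \<in> Rplus4" using Epos by (simp add: Rplus4_def)
    show "g (Ss, V1s, I1s, I2s) = 0" using ge by (simp add: e_def)
    show "\<forall>\<epsilon>>0. \<exists>\<delta>>0. \<forall>x T. ode_sol g Rplus4 {0..<T} x \<and> dist (x 0) (Ss, V1s, I1s, I2s) < \<delta> \<longrightarrow>
          (\<forall>t\<in>{0..<T}. dist (x t) (Ss, V1s, I1s, I2s) < \<epsilon>)"
    proof (intro allI impI)
      fix \<epsilon> :: real assume ep: "\<epsilon> > 0"
      define \<epsilon>' where "\<epsilon>' = min \<epsilon> \<rho>"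
      have ep': "\<epsilon>' > 0" "\<epsilon>' \<le> \<rho>" "\<epsilon>' \<le> \<epsilon>" using ep rho by (auto simp: \<epsilon>'_def)
      show "\<exists>\<delta>>0. \<forall>x T. ode_sol g Rplus4 {0..<T} x \<and> dist (x 0) (Ss, V1s, I1s, I2s) < \<delta> \<longrightarrow>
          (\<forall>t\<in>{0..<T}. dist (x t) (Ss, V1s, I1s, I2s) < \<epsilon>)"
      proof (intro exI conjI allI impI)
        show "\<epsilon>' * s > 0" using ep' s by simp
        fix x T assume a: "ode_sol g Rplus4 {0..<T} x \<and> dist (x 0) (Ss, V1s, I1s, I2s) < \<epsilon>' * s"
        then have "\<forall>t\<in>{0..<T}. norm (x t - e) < \<epsilon>'"
          using stab[OF ep'(1,2)] by (auto simp: dist_norm e_def)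
        then show "\<forall>t\<in>{0..<T}. dist (x t) (Ss, V1s, I1s, I2s) < \<epsilon>"
          using ep' by (auto simp: dist_norm e_def)
      qed
    qed
    show "\<exists>\<eta>>0. (\<forall>x0\<in>Rplus4. dist x0 (Ss, V1s, I1s, I2s) < \<eta> \<longrightarrow> (\<exists>x. ode_sol g Rplus4 {0..} x \<and> x 0 = x0)) \<and>
        (\<forall>x. ode_sol g Rplus4 {0..} x \<and> dist (x 0) (Ss, V1s, I1s, I2s) < \<eta> \<longrightarrow> (x \<longlongrightarrow> (Ss, V1s, I1s, I2s)) at_top)"
    proof (rule exI[where x="\<rho> * s"], intro conjI ballI allI impI)
      show "\<rho> * s > 0" using rho s by simp
    next
      fix x0 assume "x0 \<in> Rplus4" and x0: "dist x0 (Ss, V1s, I1s, I2s) < \<rho> * s"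
      define cp where "cp = closest_point (cball e \<rho>)"
      have cpin: "cp y \<in> cball e \<rho>" for y
        unfolding cp_def by (rule closest_point_in_set) (use rho in auto)
      have cplip: "norm (cp y - cp y') \<le> norm (y - y')" for y y'
        using closest_point_lipschitz[of "cball e \<rho>" y y'] rho by (simp add: cp_def dist_norm)
      have cpself: "cp y = y" if "y \<in> cball e \<rho>" for y
        unfolding cp_def using that by (rule closest_point_self)
      have "\<exists>Lg>0. \<forall>y\<in>cball e \<rho>. \<forall>y'\<in>cball e \<rho>. norm (g y - g y') \<le> Lg * norm (y - y')"
        unfolding g_def e_def by (rule rhs_lip[OF H1 H2 Epos(1,3,4)]) (use rho in \<open>auto simp: m0_def\<close>)
      then obtain Lg where Lg: "Lg > 0" "\<forall>y\<in>cball e \<rho>. \<forall>y'\<in>cball e \<rho>. norm (g y - g y') \<le> Lg * norm (y - y')"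
        by blast
      define G where "G y = g (cp y)" for y
      have Glip: "norm (G y - G y') \<le> Lg * norm (y - y')" for y y'
      proof -
        have "norm (G y - G y') \<le> Lg * norm (cp y - cp y')" unfolding G_def using Lg(2) cpin by simp
        also have "\<dots> \<le> Lg * norm (y - y')" using cplip Lg by (intro mult_left_mono) auto
        finally show ?thesis .
      qed
      have Gbnd: "norm (G y) \<le> Lg * \<rho>" for y
      proof -
        have e_in: "e \<in> cball e \<rho>" using rho by simp
        have "norm (G y) = norm (g (cp y) - g e)" by (simp add: G_def ge)
        also have "\<dots> \<le> Lg * norm (cp y - e)" using Lg(2) cpin e_in by simp
        also have "\<dots> \<le> Lg * \<rho>" using cpin[of y] Lg by (intro mult_left_mono) (auto simp: dist_norm norm_minus_commute)
        finally show ?thesis .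
      qed
      from picard_global[OF Lg(1) Glip Gbnd, of x0]
      obtain x where x: "x 0 = x0" "\<And>t. t \<ge> 0 \<Longrightarrow> (x has_vector_derivative G (x t)) (at t within {0..})"
        by blast
      have xsub: "(x has_vector_derivative G (x t')) (at t' within {0..<T})" if "t' \<ge> 0" for t' T
        by (rule has_vector_derivative_within_subset[OF x(2)[OF that]]) auto
      have inb: "norm (x t - e) < \<rho>" if t: "t \<ge> 0" for t
      proof -
        have "\<forall>t'\<in>{0..<t+1}. norm (x t' - e) < \<rho>"
        proof (rule lyap_stay[OF L.bbl_Bf L.Bf_sym Bpos mm Bup dec])
          have "\<forall>t'\<in>{0..<t+1}. (x has_vector_derivative G (x t')) (at t' within {0..<t+1})"
            using xsub by auto
          then show "continuous_on {0..<t+1} x" by (rule cont_der)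
          fix t' assume t': "t' \<in> {0..<t+1}" "norm (x t' - e) < \<rho>"
          then have "G (x t') = g (x t')" unfolding G_def using cpself by (simp add: dist_norm norm_minus_commute)
          then show "(x has_vector_derivative g (x t')) (at t' within {0..<t+1})"
            using xsub[of t' "t+1"] t' by auto
        next
          show "KB * (norm (x 0 - e))^2 < mm * \<rho>^2"
            by (rule initb) (use x0 x(1) in \<open>simp add: dist_norm e_def\<close>)
        qed (use rho in auto)
        then show ?thesis using t by auto
      qed
      show "\<exists>x. ode_sol g Rplus4 {0..} x \<and> x 0 = x0"
      proof (intro exI conjI)
        show "x 0 = x0" by (rule x(1))
        show "ode_sol g Rplus4 {0..} x"
          unfolding ode_sol_def
        proof (intro ballI conjI)
          fix t :: real assume "t \<in> {0..}"
          then have t: "t \<ge> 0" by simp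
          have "G (x t) = g (x t)" unfolding G_def using cpself inb[OF t] by (simp add: dist_norm norm_minus_commute)
          then show "(x has_vector_derivative g (x t)) (at t within {0..})" using x(2)[OF t] by simp
          show "x t \<in> Rplus4" using inX inb[OF t] by simp
        qed
      qed
    next
      fix x assume a: "ode_sol g Rplus4 {0..} x \<and> dist (x 0) (Ss, V1s, I1s, I2s) < \<rho> * s"
      have der: "\<And>t. t \<ge> 0 \<Longrightarrow> (x has_vector_derivative g (x t)) (at t within {0..})"
        using a unfolding ode_sol_def by auto
      have inb: "norm (x t - e) < \<rho>" if t: "t \<ge> 0" for t
      proof -
        have "ode_sol g Rplus4 {0..<t+1} x"
          unfolding ode_sol_def
        proof
          fix t' assume t': "t' \<in> {0..<t+1}"
          then have "(x has_vector_derivative g (x t')) (at t' within {0..})" using der by simp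
          then show "(x has_vector_derivative g (x t')) (at t' within {0..<t+1}) \<and> x t' \<in> Rplus4"
            using a t' unfolding ode_sol_def by (auto intro: has_vector_derivative_within_subset)
        qed
        then have "\<forall>t'\<in>{0..<t+1}. norm (x t' - e) < \<rho>"
          using stab[OF rho(1) order.refl] a by (auto simp: dist_norm e_def)
        then show ?thesis using t by auto
      qed
      have "(x \<longlongrightarrow> e) at_top"
      proof (rule lyap_decay[OF L.bbl_Bf L.Bf_sym Bpos mm Bup KB strict gam])
        show "continuous_on {0..} x" using der cont_sol[of "{0..}" x] by auto
      qed (use der inb in auto)
      then show "(x \<longlongrightarrow> (Ss, V1s, I1s, I2s)) at_top" by (simp add: e_def)
    qed
  qed
qed

end
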